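(* In the standing setting, assume (A1), (A3), (A4) and (A7), and consider the coupled chains. Then there exist $h_0>0$ and $C>0$, independent of $s,h,k$, such that for all $s\in\mathbb N_+$, $h\in(0,h_0)$ and all $k\ge1$, $$\mathbb E|X^{c+,f}_k-X^{c-,f}_k|^4\le C\frac{h^2}{s^2}.$$
   Context: Standing setting. Let $d,n\in\mathbb N_+$, $\beta\ge0$, and let $a:\mathbb R^d\to\mathbb R^d$, $b:\mathbb R^d\times\mathbb R^n\to\mathbb R^d$ be measurable. $|\cdot|$ is the Euclidean norm (Frobenius norm for matrices), $\nabla$ the Jacobian in $x$, $D^\alpha$ the partial derivative in $x$ for a multi-index $\alpha$. For each $s\in\mathbb N_+$ a law on $\mathbb R^n$ is given; a random variable with this law is a drift variable at level $s$ (generically $U^s$), and $\mathbb E[b(x,U^s)]=a(x)$ for all $x$. All constants below are independent of $s,x,y$. (A1) $|a(x)-a(y)|\le L|x-y|$; $\langle x-y,a(x)-a(y)\rangle\le-K|x-y|^2$ with $K>0$; $a\in C^2$ with $|D^\alpha a|\le C_{a^{(|\alpha|)}}$ for $|\alpha|=1,2$. (A2) $\mathbb E|b(x,U^s)-b(y,U^s)|^2\le\bar L^2|x-y|^2$. (A3) $\mathbb E|b(x,U^s)-a(x)|^2\le\sigma_s^2(1+|x|^2)$ with $\sigma_s^2\le\kappa/s$. (A4) $\mathbb E|b(x,U^s)-a(x)|^4\le\sigma^{(4)}_s(1+|x|^4)$ with $\sigma^{(4)}_s\le\kappa/s^2$. (A5) for every $u$, $x\mapsto b(x,u)$ is $C^2$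 with $|D^\alpha b(x,u)|\le C_{b^{(2)}}$ for $|\alpha|=2$, and $\mathbb E|\nabla b(x,U^s)-\nabla a(x)|^4\le\sigma^{(4)}_s(1+|x|^4)$. (A6) $\mathbb E[D^\alpha b(x,U^s)]=D^\alpha a(x)$ for $|\alpha|\le2$. (A7) $|a(x)|^4\le L_0^{(4)}(1+|x|^4)$. (A8) every drift variable $U^{2s}$ at level $2s$ determines (measurably) two drift variables $U^{2s,1},U^{2s,2}$ at level $s$ with $b(x,U^{2s})=\frac12b(x,U^{2s,1})+\frac12b(x,U^{2s,2})$ for all $x$. Coupled chains. Fix $s\in\mathbb N_+$, $h>0$. Let $(Z_k)_{k\ge1}$ be i.i.d. $N(0,I_d)$, $(U^f_k)_{k\ge0}$ i.i.d. drift variables at level $2s$, and $X_0$ an $\mathbb R^d$-valued random variable with $\mathbb E|X_0|^4<\infty$, all independent; let $U^{f,1}_k,U^{f,2}_k$ be the level-$s$ variables given by (A8). Put $V^f_k=U^f_k$, $V^{c-}_k=U^{f,1}_k$, $V^{c+}_k=U^{f,2}_k$. For $j\in\{f,c-,c+\}$, all chains start at $X_0$: $X^{j,f}_{k+1}=X^{j,f}_k+hb(X^{j,f}_k,V^j_k)+\beta\sqrt hZ_{k+1}$ ($k\ge0$); for even $k\ge0$: $X^{j,c-}_{k+2}=X^{j,c-}_k+2hb(X^{j,c-}_k,V^j_k)+\beta\sqrt h(Z_{k+1}+Z_{k+2})$, $X^{j,c+}_{k+2}=X^{j,c+}_k+2hb(X^{j,c+}_k,V^j_{k+1})+\beta\sqrt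 h(Z_{k+1}+Z_{k+2})$. Exact-drift chains from $X_0$: $X_{k+1}=X_k+ha(X_k)+\beta\sqrt hZ_{k+1}$ and, for even $k$, $X^c_{k+2}=X^c_k+2ha(X^c_k)+\beta\sqrt h(Z_{k+1}+Z_{k+2})$. Averages: $\bar X^{j,c}_k=\frac12(X^{j,c-}_k+X^{j,c+}_k)$, $\bar X^{c,f}_k=\frac12(X^{c-,f}_k+X^{c+,f}_k)$. *)

theory Defs
  imports "HOL-Probability.Probability"
begin

primrec fine_chain ::
  "real \<Rightarrow> real \<Rightarrow> ('x::real_normed_vector \<Rightarrow> 'u \<Rightarrow> 'x) \<Rightarrow> ('w \<Rightarrow> 'x)
     \<Rightarrow> (nat \<Rightarrow> 'w \<Rightarrow> 'x) \<Rightarrow> (nat \<Rightarrow> 'w \<Rightarrow> 'u) \<Rightarrow> nat \<Rightarrow> 'w \<Rightarrow> 'x" where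
  "fine_chain h \<beta> b X0 Z V 0 \<omega> = X0 \<omega>"
| "fine_chain h \<beta> b X0 Z V (Suc k) \<omega> =
     fine_chain h \<beta> b X0 Z V k \<omega> + h *\<^sub>R b (fine_chain h \<beta> b X0 Z V k \<omega>) (V k \<omega>)
       + (\<beta> * sqrt h) *\<^sub>R Z (Suc k) \<omega>"

text \<open>Index set for the independent family: X0, the Gaussian vectors Z_k (k >= 1),
  and the drift variables U_k (k >= 0).\<close>
datatype rv_idx = IX0 | IZ nat | IU nat

definition rv_indep ::
  "'w measure \<Rightarrow> ('w \<Rightarrow> real^'d) \<Rightarrow> (nat \<Rightarrow> 'w \<Rightarrow> real^'d) \<Rightarrow> (nat \<Rightarrow> 'w \<Rightarrow> 'u::topological_space) \<Rightarrow> bool" where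
  "rv_indep M X0 Z U \<longleftrightarrow>
     prob_space.indep_sets M
       (\<lambda>i. case i of
              IX0 \<Rightarrow> sets (vimage_algebra (space M) X0 borel)
            | IZ k \<Rightarrow> sets (vimage_algebra (space M) (Z k) borel)
            | IU k \<Rightarrow> sets (vimage_algebra (space M) (U k) borel))
       {i. i \<noteq> IZ 0}"

definition std_gaussian_vec :: "'w measure \<Rightarrow> ('w \<Rightarrow> real^'d) \<Rightarrow> bool" where
  "std_gaussian_vec M Z \<longleftrightarrow>
     prob_space.indep_vars M (\<lambda>_. borel) (\<lambda>i \<omega>. Z \<omega> $ i) UNIV \<and>
     (\<forall>i. distributed M lborel (\<lambda>\<omega>. Z \<omega> $ i) std_normal_density)"

end

theory Submission
  imports Defs
begin


lemma fourth_pw: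
  fixes A B :: "'v::real_inner"
  shows "norm (A + B)^4 \<le> norm A^4 + 4 * norm A^2 * inner A B + 8 * norm A^2 * norm B^2 + 3 * norm B^4"
proof -
  define a where "a = norm A ^ 2"
  define q where "q = norm B ^ 2"
  define p where "p = inner A B"
  have e: "norm (A + B)^2 = a + 2 * p + q"
    unfolding a_def q_def p_def power2_norm_eq_inner by (simp add: inner_add inner_commute)
  have cs: "p^2 \<le> a * q"
  proof -
    have "\<bar>p\<bar> \<le> norm A * norm B" unfolding p_def by (rule Cauchy_Schwarz_ineq2)
    then have "p^2 \<le> (norm A * norm B)^2"
      by (metis abs_ge_zero abs_le_square_iff abs_mult abs_norm_cancel)
    then show ?thesis by (simp add: a_def q_def power_mult_distrib)
  qed
  have d: "a + q - 2 * p \<ge> 0"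
  proof -
    have "norm (A - B)^2 = a + q - 2 * p"
      unfolding a_def q_def p_def power2_norm_eq_inner by (simp add: inner_diff inner_commute)
    then show ?thesis by (metis zero_le_power2)
  qed
  have q0: "q \<ge> 0" unfolding q_def by simp
  have m: "q * (a + q - 2 * p) \<ge> 0" using q0 d by simp
  have "norm (A + B)^4 = (a + 2*p + q)^2"
    by (metis e power_mult numeral_Bit0 numeral_One mult_2 power2_eq_square one_add_one
        power_add power_one_right)
  also have "\<dots> \<le> a^2 + 4 * a * p + 8 * a * q + 3 * q^2"
    using cs m by (simp add: power2_eq_square algebra_simps)
  also have "\<dots> = norm A^4 + 4 * norm A^2 * inner A B + 8 * norm A^2 * norm B^2 + 3 * norm B^4"
    unfolding a_def q_def p_def by (simp flip: power_mult)
  finally show ?thesis .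
qed

lemma (in prob_space) fourth_moment_step:
  fixes B :: "'a \<Rightarrow> 'v::euclidean_space" and A :: 'v
  assumes Bm: "B \<in> borel_measurable M"
    and mean0: "integrable M (\<lambda>x. inner A (B x))" "(\<integral>x. inner A (B x) \<partial>M) = 0"
    and m2: "(\<integral>\<^sup>+x. ennreal (norm (B x)^2) \<partial>M) \<le> ennreal q2"
    and m4: "(\<integral>\<^sup>+x. ennreal (norm (B x)^4) \<partial>M) \<le> ennreal q4"
    and q: "q2 \<ge> 0" "q4 \<ge> 0"
  shows "(\<integral>\<^sup>+x. ennreal (norm (A + B x)^4) \<partial>M) \<le> ennreal (norm A^4 + 8 * norm A^2 * q2 + 3 * q4)"
proof -
  have i4: "integrable M (\<lambda>x. norm (B x)^4)"
    by (rule integrableI_nonneg) (use Bm m4 in \<open>auto intro: le_less_trans\<close>)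
  have i2: "integrable M (\<lambda>x. norm (B x)^2)"
    by (rule integrableI_nonneg) (use Bm m2 in \<open>auto intro: le_less_trans\<close>)
  have I4: "(\<integral>x. norm (B x)^4 \<partial>M) \<le> q4"
  proof -
    have "ennreal (\<integral>x. norm (B x)^4 \<partial>M) = (\<integral>\<^sup>+x. ennreal (norm (B x)^4) \<partial>M)"
      by (rule nn_integral_eq_integral[symmetric]) (use i4 in auto)
    with m4 have "ennreal (\<integral>x. norm (B x)^4 \<partial>M) \<le> ennreal q4" by simp
    with q show ?thesis by (simp add: ennreal_le_iff)
  qed
  have I2: "(\<integral>x. norm (B x)^2 \<partial>M) \<le> q2"
  proof -
    have "ennreal (\<integral>x. norm (B x)^2 \<partial>M) = (\<integral>\<^sup>+x. ennreal (norm (B x)^2) \<partial>M)"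
      by (rule nn_integral_eq_integral[symmetric]) (use i2 in auto)
    with m2 have "ennreal (\<integral>x. norm (B x)^2 \<partial>M) \<le> ennreal q2" by simp
    with q show ?thesis by (simp add: ennreal_le_iff)
  qed
  define f where "f x = norm A^4 + 4 * norm A^2 * inner A (B x) + 8 * norm A^2 * norm (B x)^2 + 3 * norm (B x)^4" for x
  have fi: "integrable M f"
    unfolding f_def using i2 i4 mean0(1) by auto
  have fint: "(\<integral>x. f x \<partial>M) = norm A^4 + 8 * norm A^2 * (\<integral>x. norm (B x)^2 \<partial>M) + 3 * (\<integral>x. norm (B x)^4 \<partial>M)"
    unfolding f_def using i2 i4 mean0 by (simp add: prob_space)
  have fge: "norm (A + B x)^4 \<le> f x" for x unfolding f_def by (rule fourth_pw)
  have "(\<integral>\<^sup>+x. ennreal (norm (A + B x)^4) \<partial>M) \<le> (\<integral>\<^sup>+x. ennreal (f x) \<partial>M)"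
    by (rule nn_integral_mono) (use fge in \<open>auto intro: ennreal_leI\<close>)
  also have "\<dots> = ennreal (\<integral>x. f x \<partial>M)"
  proof (rule nn_integral_eq_integral)
    show "AE x in M. 0 \<le> f x"
    proof (rule AE_I2)
      fix x show "0 \<le> f x" using fge[of x] by (meson norm_ge_zero order_trans zero_le_power)
    qed
  qed (rule fi)
  also have "\<dots> \<le> ennreal (norm A^4 + 8 * norm A^2 * q2 + 3 * q4)"
    unfolding fint using I2 I4 by (intro ennreal_leI add_mono mult_left_mono) auto
  finally show ?thesis .
qed


locale L6 = prob_space M for M :: "'w measure" +
  fixes a :: "real^'d \<Rightarrow> real^'d"
    and b :: "real^'d \<Rightarrow> real^'n \<Rightarrow> real^'d"
    and \<mu> :: "nat \<Rightarrow> (real^'n) measure"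
    and phiA phiB :: "nat \<Rightarrow> real^'n \<Rightarrow> real^'n"
    and X0 :: "'w \<Rightarrow> real^'d"
    and Z :: "nat \<Rightarrow> 'w \<Rightarrow> real^'d"
    and U :: "nat \<Rightarrow> nat \<Rightarrow> 'w \<Rightarrow> real^'n"
    and \<beta> L K \<kappa> L04 :: real
  assumes beta: "\<beta> \<ge> 0"
    and b_meas: "case_prod b \<in> borel_measurable borel"
    and mu_prob: "\<And>s. s \<ge> 1 \<Longrightarrow> prob_space (\<mu> s)"
    and mu_sets: "\<And>s. s \<ge> 1 \<Longrightarrow> sets (\<mu> s) = sets borel"
    and unbiased_int: "\<And>s x. s \<ge> 1 \<Longrightarrow> integrable (\<mu> s) (b x)"
    and unbiased: "\<And>s x. s \<ge> 1 \<Longrightarrow> (\<integral>u. b x u \<partial>\<mu> s) = a x"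
    and A1_lip: "\<And>x y. norm (a x - a y) \<le> L * norm (x - y)"
    and A1_K: "K > 0"
    and A1_mono: "\<And>x y. inner (x - y) (a x - a y) \<le> - K * (norm (x - y))\<^sup>2"
    and A3: "\<And>s x. s \<ge> 1 \<Longrightarrow>
       (\<integral>\<^sup>+u. ennreal ((norm (b x u - a x))^2) \<partial>\<mu> s) \<le> ennreal (\<kappa> / real s * (1 + (norm x)^2))"
    and A4: "\<And>s x. s \<ge> 1 \<Longrightarrow>
       (\<integral>\<^sup>+u. ennreal ((norm (b x u - a x))^4) \<partial>\<mu> s) \<le> ennreal (\<kappa> / (real s)^2 * (1 + (norm x)^4))"
    and A8_meas1: "\<And>s. s \<ge> 1 \<Longrightarrow> phiA s \<in> borel_measurable borel"
    and A8_meas2: "\<And>s. s \<ge> 1 \<Longrightarrow> phiB s \<in> borel_measurable borel"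
    and A8_law1: "\<And>s. s \<ge> 1 \<Longrightarrow> distr (\<mu> (2 * s)) borel (phiA s) = \<mu> s"
    and A8_law2: "\<And>s. s \<ge> 1 \<Longrightarrow> distr (\<mu> (2 * s)) borel (phiB s) = \<mu> s"
    and X0_meas: "X0 \<in> borel_measurable M"
    and X0_mom: "(\<integral>\<^sup>+\<omega>. ennreal ((norm (X0 \<omega>))^4) \<partial>M) < \<infinity>"
    and Z_meas: "\<And>k. Z k \<in> borel_measurable M"
    and Z_gauss: "\<And>k. k \<ge> 1 \<Longrightarrow> std_gaussian_vec M (Z k)"
    and U_meas: "\<And>s k. U s k \<in> borel_measurable M"
    and U_law: "\<And>s k. s \<ge> 1 \<Longrightarrow> distr M borel (U s k) = \<mu> (2 * s)"
    and indep: "\<And>s. s \<ge> 1 \<Longrightarrow> rv_indep M X0 Z (U s)"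
begin

definition Ev :: "nat \<Rightarrow> rv_idx \<Rightarrow> 'w set set" where
  "Ev s i = (case i of
              IX0 \<Rightarrow> sets (vimage_algebra (space M) X0 borel)
            | IZ k \<Rightarrow> sets (vimage_algebra (space M) (Z k) borel)
            | IU k \<Rightarrow> sets (vimage_algebra (space M) (U s k) borel))"

definition SM :: "nat \<Rightarrow> rv_idx set \<Rightarrow> 'w measure" where
  "SM s I = sigma (space M) (\<Union>i\<in>I. Ev s i)"

lemma Ev_sub: "Ev s i \<subseteq> Pow (space M)"
  unfolding Ev_def by (auto split: rv_idx.splits) (metis space_vimage_algebra sets.sets_into_space subsetD)+

lemma space_SM[simp]: "space (SM s I) = space M"
  unfolding SM_def using Ev_sub by (intro space_measure_of) auto

lemma sets_SM: "sets (SM s I) = sigma_sets (space M) (\<Union>i\<in>I. Ev s i)"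
  unfolding SM_def using Ev_sub by (intro sets_measure_of) auto

lemma meas_from_Ev:
  assumes f: "f \<in> space M \<rightarrow> space N" and i: "i \<in> I" and E: "sets (vimage_algebra (space M) f N) \<subseteq> Ev s i"
  shows "f \<in> measurable (SM s I) N"
proof -
  have "f \<in> measurable (vimage_algebra (space M) f N) N" by (rule measurable_vimage_algebra1[OF f])
  moreover have "subalgebra (SM s I) (vimage_algebra (space M) f N)"
    unfolding subalgebra_def sets_SM using E i by auto
  ultimately show ?thesis by (rule measurable_from_subalg[rotated])
qed

lemma X0_SM: "IX0 \<in> I \<Longrightarrow> X0 \<in> borel_measurable (SM s I)"
  by (rule meas_from_Ev) (auto simp: Ev_def)

lemma Z_SM: "IZ k \<in> I \<Longrightarrow> Z k \<in> borel_measurable (SM s I)"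
  by (rule meas_from_Ev) (auto simp: Ev_def)

lemma U_SM: "IU k \<in> I \<Longrightarrow> U s k \<in> borel_measurable (SM s I)"
  by (rule meas_from_Ev) (auto simp: Ev_def)

lemma b_comp_meas:
  assumes "f \<in> borel_measurable N" "g \<in> borel_measurable N"
  shows "(\<lambda>\<omega>. b (f \<omega>) (g \<omega>)) \<in> borel_measurable N"
proof -
  have "(\<lambda>\<omega>. (f \<omega>, g \<omega>)) \<in> measurable N (borel \<Otimes>\<^sub>M borel)"
    using assms by (rule measurable_Pair)
  moreover have "case_prod b \<in> measurable (borel \<Otimes>\<^sub>M borel) borel"
    using b_meas by (simp add: borel_prod)
  ultimately have "(\<lambda>\<omega>. case_prod b (f \<omega>, g \<omega>)) \<in> borel_measurable N"
    by (rule measurable_compose)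
  then show ?thesis by simp
qed

lemma chain_SM:
  assumes phi: "phi \<in> borel_measurable borel"
    and I: "IX0 \<in> I" "\<And>j. 1 \<le> j \<Longrightarrow> j \<le> k \<Longrightarrow> IZ j \<in> I" "\<And>j. j < k \<Longrightarrow> IU j \<in> I"
  shows "fine_chain h \<beta> b X0 Z (\<lambda>k \<omega>. phi (U s k \<omega>)) k \<in> borel_measurable (SM s I)"
  using I
proof (induction k)
  case 0
  then show ?case by (simp add: X0_SM)
next
  case (Suc k)
  have Y: "fine_chain h \<beta> b X0 Z (\<lambda>k \<omega>. phi (U s k \<omega>)) k \<in> borel_measurable (SM s I)"
    using Suc by auto
  have V: "(\<lambda>\<omega>. phi (U s k \<omega>)) \<in> borel_measurable (SM s I)"
    using measurable_compose[OF U_SM[of k I s] phi] Suc by auto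
  have Zm: "Z (Suc k) \<in> borel_measurable (SM s I)" using Suc by (intro Z_SM) auto
  show ?case
    using Y V Zm b_comp_meas[OF Y V] by simp
qed

lemma chain_meas:
  assumes phi: "phi \<in> borel_measurable borel"
  shows "fine_chain h \<beta> b X0 Z (\<lambda>k \<omega>. phi (U s k \<omega>)) k \<in> borel_measurable M"
proof (induction k)
  case 0 then show ?case by (simp add: X0_meas)
next
  case (Suc k)
  have V: "(\<lambda>\<omega>. phi (U s k \<omega>)) \<in> borel_measurable M"
    using measurable_compose[OF U_meas phi] by auto
  show ?case using Suc V b_comp_meas[OF Suc V] Z_meas by simp
qed

end


lemma (in prob_space) indep_set_distr_pair:
  assumes ind: "indep_set A B"
    and X: "X \<in> measurable M S" and Y: "Y \<in> measurable M T"
    and XA: "\<And>a. a \<in> sets S \<Longrightarrow> X -` a \<inter> space M \<in> A"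
    and YB: "\<And>c. c \<in> sets T \<Longrightarrow> Y -` c \<inter> space M \<in> B"
  shows "distr M (S \<Otimes>\<^sub>M T) (\<lambda>x. (X x, Y x)) = distr M S X \<Otimes>\<^sub>M distr M T Y"
proof -
  interpret PX: prob_space "distr M S X" by (rule prob_space_distr) fact
  interpret PY: prob_space "distr M T Y" by (rule prob_space_distr) fact
  interpret XY: pair_prob_space "distr M S X" "distr M T Y" ..
  have XY: "(\<lambda>x. (X x, Y x)) \<in> measurable M (S \<Otimes>\<^sub>M T)" using X Y by (rule measurable_Pair)
  have "distr M S X \<Otimes>\<^sub>M distr M T Y = distr M (S \<Otimes>\<^sub>M T) (\<lambda>x. (X x, Y x))"
  proof (rule pair_measure_eqI)
    show "sigma_finite_measure (distr M S X)" ..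
    show "sigma_finite_measure (distr M T Y)" ..
    show "sets (distr M S X \<Otimes>\<^sub>M distr M T Y) = sets (distr M (S \<Otimes>\<^sub>M T) (\<lambda>x. (X x, Y x)))"
      by simp
    fix C D assume C: "C \<in> sets (distr M S X)" and D: "D \<in> sets (distr M T Y)"
    then have C': "C \<in> sets S" and D': "D \<in> sets T" by auto
    have "emeasure (distr M (S \<Otimes>\<^sub>M T) (\<lambda>x. (X x, Y x))) (C \<times> D)
        = emeasure M ((\<lambda>x. (X x, Y x)) -` (C \<times> D) \<inter> space M)"
      using C' D' by (intro emeasure_distr[OF XY]) auto
    also have "(\<lambda>x. (X x, Y x)) -` (C \<times> D) \<inter> space M = (X -` C \<inter> space M) \<inter> (Y -` D \<inter> space M)"
      by auto
    also have "emeasure M \<dots> = emeasure M (X -` C \<inter> space M) * emeasure M (Y -` D \<inter> space M)"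
      using indep_setD[OF ind XA[OF C'] YB[OF D']]
      by (simp add: emeasure_eq_measure measure_nonneg ennreal_mult)
    also have "\<dots> = emeasure (distr M S X) C * emeasure (distr M T Y) D"
      using X Y C' D' by (simp add: emeasure_distr)
    finally show "emeasure (distr M S X) C * emeasure (distr M T Y) D =
      emeasure (distr M (S \<Otimes>\<^sub>M T) (\<lambda>x. (X x, Y x))) (C \<times> D)" by simp
  qed
  then show ?thesis by simp
qed

context L6 begin

lemma indep2:
  assumes s: "s \<ge> 1" and dis: "I0 \<inter> I1 = {}" and sub: "IZ 0 \<notin> I0" "IZ 0 \<notin> I1"
  shows "indep_set (sigma_sets (space M) (\<Union>i\<in>I0. Ev s i)) (sigma_sets (space M) (\<Union>i\<in>I1. Ev s i))"
proof -
  have "indep_sets (Ev s) {i. i \<noteq> IZ 0}"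
    using indep[OF s] unfolding rv_indep_def Ev_def[abs_def] by simp
  then have i1: "indep_sets (Ev s) (\<Union>j\<in>UNIV. case_bool I0 I1 j)"
    by (rule indep_sets_mono_index[rotated]) (use sub in \<open>auto split: bool.splits\<close>)
  have "indep_sets (\<lambda>j. sigma_sets (space M) (\<Union>i\<in>case_bool I0 I1 j. Ev s i)) UNIV"
  proof (rule indep_sets_collect_sigma[OF i1])
    fix i j show "Int_stable (Ev s i)" unfolding Ev_def by (auto split: rv_idx.splits intro: sets.Int_stable)
  next
    show "disjoint_family_on (case_bool I0 I1) UNIV"
      using dis unfolding disjoint_family_on_def by (auto split: bool.splits)
  qed
  moreover have "(\<lambda>j. sigma_sets (space M) (\<Union>i\<in>case_bool I0 I1 j. Ev s i))
     = case_bool (sigma_sets (space M) (\<Union>i\<in>I0. Ev s i)) (sigma_sets (space M) (\<Union>i\<in>I1. Ev s i))"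
    by (auto split: bool.splits)
  ultimately show ?thesis unfolding indep_set_def by simp
qed

lemma Ev_sets: "Ev s i \<subseteq> sets M"
  unfolding Ev_def using X0_meas Z_meas U_meas
  by (auto split: rv_idx.splits simp: measurable_iff_sets)

lemma subalg_SM: "subalgebra M (SM s I)"
  unfolding subalgebra_def sets_SM using Ev_sets by (auto intro!: sets.sigma_sets_subset)

lemma distr_from_SM:
  assumes s: "s \<ge> 1" and dis: "I0 \<inter> I1 = {}" and sub: "IZ 0 \<notin> I0" "IZ 0 \<notin> I1"
    and X: "X \<in> measurable (SM s I0) S" and Y: "Y \<in> measurable (SM s I1) T"
  shows "distr M (S \<Otimes>\<^sub>M T) (\<lambda>x. (X x, Y x)) = distr M S X \<Otimes>\<^sub>M distr M T Y"
proof (rule indep_set_distr_pair[OF indep2[OF s dis sub]])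
  show "X \<in> measurable M S" by (rule measurable_from_subalg[OF subalg_SM X])
  show "Y \<in> measurable M T" by (rule measurable_from_subalg[OF subalg_SM Y])
  show "X -` A \<inter> space M \<in> sigma_sets (space M) (\<Union>i\<in>I0. Ev s i)" if "A \<in> sets S" for A
    using measurable_sets[OF X that] by (simp add: sets_SM)
  show "Y -` A \<inter> space M \<in> sigma_sets (space M) (\<Union>i\<in>I1. Ev s i)" if "A \<in> sets T" for A
    using measurable_sets[OF Y that] by (simp add: sets_SM)
qed

definition Y :: "nat \<Rightarrow> real \<Rightarrow> (real^'n \<Rightarrow> real^'n) \<Rightarrow> nat \<Rightarrow> 'w \<Rightarrow> real^'d" where
  "Y s h phi = fine_chain h \<beta> b X0 Z (\<lambda>k \<omega>. phi (U s k \<omega>))"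

lemma Y_0: "Y s h phi 0 \<omega> = X0 \<omega>" by (simp add: Y_def)
lemma Y_Suc: "Y s h phi (Suc k) \<omega> = Y s h phi k \<omega> + h *\<^sub>R b (Y s h phi k \<omega>) (phi (U s k \<omega>))
       + (\<beta> * sqrt h) *\<^sub>R Z (Suc k) \<omega>" by (simp add: Y_def)

lemma Y_meas: "phi \<in> borel_measurable borel \<Longrightarrow> Y s h phi k \<in> borel_measurable M"
  unfolding Y_def by (rule chain_meas)

lemma key_indep:
  assumes s: "s \<ge> 1" and p1: "phi1 \<in> borel_measurable borel" and p2: "phi2 \<in> borel_measurable borel"
    and F: "F \<in> borel_measurable (borel \<Otimes>\<^sub>M (borel \<Otimes>\<^sub>M borel))"
  shows "(\<integral>\<^sup>+\<omega>. F ((Y s h phi1 k \<omega>, Y s h phi2 k \<omega>), (U s k \<omega>, Z (Suc k) \<omega>)) \<partial>M)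
    = (\<integral>\<^sup>+w. (\<integral>\<^sup>+u. (\<integral>\<^sup>+z. F (w, (u, z)) \<partial>(distr M borel (Z (Suc k)))) \<partial>(\<mu> (2 * s)))
         \<partial>(distr M borel (\<lambda>\<omega>. (Y s h phi1 k \<omega>, Y s h phi2 k \<omega>))))"
proof -
  define W where "W = (\<lambda>\<omega>. (Y s h phi1 k \<omega>, Y s h phi2 k \<omega>))"
  define V where "V = (\<lambda>\<omega>. (U s k \<omega>, Z (Suc k) \<omega>))"
  define I0 where "I0 = insert IX0 (IZ ` {1..k} \<union> IU ` {..<k})"
  define I1 where "I1 = {IU k, IZ (Suc k)}"
  have WI: "W \<in> measurable (SM s I0) (borel \<Otimes>\<^sub>M borel)"
    unfolding W_def Y_def
    by (intro measurable_Pair chain_SM p1 p2) (auto simp: I0_def)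
  then have WI': "W \<in> measurable (SM s I0) borel" by (simp add: borel_prod)
  have VI: "V \<in> measurable (SM s I1) (borel \<Otimes>\<^sub>M borel)"
    unfolding V_def by (intro measurable_Pair U_SM Z_SM) (auto simp: I1_def)
  have d1: "distr M (borel \<Otimes>\<^sub>M (borel \<Otimes>\<^sub>M borel)) (\<lambda>x. (W x, V x)) = distr M borel W \<Otimes>\<^sub>M distr M (borel \<Otimes>\<^sub>M borel) V"
    by (rule distr_from_SM[OF s _ _ _ WI' VI]) (auto simp: I0_def I1_def)
  have d2: "distr M (borel \<Otimes>\<^sub>M borel) V = distr M borel (U s k) \<Otimes>\<^sub>M distr M borel (Z (Suc k))"
    unfolding V_def
    by (rule distr_from_SM[OF s, of "{IU k}" "{IZ (Suc k)}"]) (auto intro: U_SM Z_SM)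
  have d2': "distr M (borel \<Otimes>\<^sub>M borel) V = \<mu> (2 * s) \<Otimes>\<^sub>M distr M borel (Z (Suc k))"
    using d2 U_law[OF s] by simp
  interpret PZ: prob_space "distr M borel (Z (Suc k))" by (rule prob_space_distr) (rule Z_meas)
  interpret PU: prob_space "\<mu> (2 * s)" using mu_prob s by simp
  interpret PUZ: pair_prob_space "\<mu> (2 * s)" "distr M borel (Z (Suc k))" ..
  have Wm: "W \<in> measurable M borel" by (rule measurable_from_subalg[OF subalg_SM WI'])
  have Vm: "V \<in> measurable M (borel \<Otimes>\<^sub>M borel)" by (rule measurable_from_subalg[OF subalg_SM VI])
  have WVm: "(\<lambda>x. (W x, V x)) \<in> measurable M (borel \<Otimes>\<^sub>M (borel \<Otimes>\<^sub>M borel))"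
    using Wm Vm by (rule measurable_Pair)
  have sets1: "sets (distr M borel W \<Otimes>\<^sub>M (\<mu> (2 * s) \<Otimes>\<^sub>M distr M borel (Z (Suc k)))) = sets (borel \<Otimes>\<^sub>M (borel \<Otimes>\<^sub>M borel))"
    using mu_sets[of "2 * s"] s by (intro sets_pair_measure_cong) auto
  have sets2: "sets (\<mu> (2 * s) \<Otimes>\<^sub>M distr M borel (Z (Suc k))) = sets (borel \<Otimes>\<^sub>M borel)"
    using mu_sets[of "2 * s"] s by (intro sets_pair_measure_cong) auto
  have Fm1: "F \<in> borel_measurable (distr M borel W \<Otimes>\<^sub>M (\<mu> (2 * s) \<Otimes>\<^sub>M distr M borel (Z (Suc k))))"
    using F by (simp add: measurable_cong_sets[OF sets1 refl])
  have "(\<integral>\<^sup>+\<omega>. F (W \<omega>, V \<omega>) \<partial>M) = (\<integral>\<^sup>+p. F p \<partial>(distr M (borel \<Otimes>\<^sub>M (borel \<Otimes>\<^sub>M borel)) (\<lambda>x. (W x, V x))))"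
    by (rule nn_integral_distr[symmetric, OF WVm]) (simp add: F)
  also have "\<dots> = (\<integral>\<^sup>+p. F p \<partial>(distr M borel W \<Otimes>\<^sub>M (\<mu> (2 * s) \<Otimes>\<^sub>M distr M borel (Z (Suc k)))))"
    by (simp add: d1 d2')
  also have "\<dots> = (\<integral>\<^sup>+w. (\<integral>\<^sup>+v. F (w, v) \<partial>(\<mu> (2 * s) \<Otimes>\<^sub>M distr M borel (Z (Suc k)))) \<partial>(distr M borel W))"
    by (rule PUZ.nn_integral_fst[symmetric, OF Fm1])
  also have "\<dots> = (\<integral>\<^sup>+w. (\<integral>\<^sup>+u. (\<integral>\<^sup>+z. F (w, (u, z)) \<partial>(distr M borel (Z (Suc k)))) \<partial>(\<mu> (2 * s))) \<partial>(distr M borel W))"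
  proof (rule nn_integral_cong)
    fix w
    have Fw: "(\<lambda>v. F (w, v)) \<in> borel_measurable (borel \<Otimes>\<^sub>M borel)"
      using measurable_Pair2[OF F, of w] by simp
    then have Fw': "(\<lambda>v. F (w, v)) \<in> borel_measurable (\<mu> (2 * s) \<Otimes>\<^sub>M distr M borel (Z (Suc k)))"
      by (simp add: measurable_cong_sets[OF sets2 refl])
    show "(\<integral>\<^sup>+v. F (w, v) \<partial>(\<mu> (2 * s) \<Otimes>\<^sub>M distr M borel (Z (Suc k))))
      = (\<integral>\<^sup>+u. (\<integral>\<^sup>+z. F (w, (u, z)) \<partial>(distr M borel (Z (Suc k)))) \<partial>(\<mu> (2 * s)))"
      using PZ.nn_integral_fst[OF Fw'] by simp
  qed
  finally show ?thesis unfolding W_def V_def .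
qed

end


lemma norm_sq_vec: "norm (z::real^'d)^2 = (\<Sum>i\<in>UNIV. (z $ i)^2)"
  by (simp add: norm_vec_def L2_set_def sum_nonneg)

lemma inner_vec_sum: "inner (v::real^'d) z = (\<Sum>i\<in>UNIV. v $ i * z $ i)"
  by (simp add: inner_vec_def)

context L6 begin

lemma Zc_distr: "k \<ge> 1 \<Longrightarrow> distr M lborel (\<lambda>\<omega>. Z k \<omega> $ i) = std_normal_distribution"
  using Z_gauss[of k] unfolding std_gaussian_vec_def distributed_def by auto

lemma Zc_meas: "(\<lambda>\<omega>. Z k \<omega> $ i) \<in> borel_measurable M"
  using measurable_compose[OF Z_meas[of k] borel_measurable_nth[of i]] by simp

lemma Zc_mom_even:
  assumes k: "k \<ge> 1"
  shows "(\<integral>\<^sup>+\<omega>. ennreal ((Z k \<omega> $ i)^(2*j)) \<partial>M) = ennreal (fact (2*j) / (2^j * fact j))"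
proof -
  have m: "(\<lambda>\<omega>. Z k \<omega> $ i) \<in> measurable M lborel" using Zc_meas by simp
  have "(\<integral>\<^sup>+\<omega>. ennreal ((Z k \<omega> $ i)^(2*j)) \<partial>M) = (\<integral>\<^sup>+x. ennreal (x^(2*j)) \<partial>(distr M lborel (\<lambda>\<omega>. Z k \<omega> $ i)))"
    by (rule nn_integral_distr[symmetric, OF m]) simp
  also have "\<dots> = (\<integral>\<^sup>+x. ennreal (x^(2*j)) \<partial>std_normal_distribution)"
    by (simp add: Zc_distr[OF k])
  also have "\<dots> = ennreal (\<integral>x. x^(2*j) \<partial>std_normal_distribution)"
    by (rule nn_integral_eq_integral) (auto simp: std_normal_distribution_even_moments(2) zero_le_even_power)
  also have "\<dots> = ennreal (fact (2*j) / (2^j * fact j))"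
    by (simp add: std_normal_distribution_even_moments(1))
  finally show ?thesis .
qed

lemma Zc_int:
  assumes k: "k \<ge> 1"
  shows "integrable M (\<lambda>\<omega>. Z k \<omega> $ i)" "(\<integral>\<omega>. Z k \<omega> $ i \<partial>M) = 0"
proof -
  have m: "(\<lambda>\<omega>. Z k \<omega> $ i) \<in> measurable M lborel" using Zc_meas by simp
  have "integrable std_normal_distribution (\<lambda>x. x)"
    using integrable_std_normal_distribution_moment[of 1] by simp
  then have "integrable (distr M lborel (\<lambda>\<omega>. Z k \<omega> $ i)) (\<lambda>x. x)" by (simp add: Zc_distr[OF k])
  then show "integrable M (\<lambda>\<omega>. Z k \<omega> $ i)"
    using integrable_distr_eq[OF m, of "\<lambda>x. x"] by simp
  have "(\<integral>\<omega>. Z k \<omega> $ i \<partial>M) = (\<integral>x. x \<partial>(distr M lborel (\<lambda>\<omega>. Z k \<omega> $ i)))"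
    by (rule integral_distr[symmetric, OF m]) simp
  also have "\<dots> = (\<integral>x. x^1 \<partial>std_normal_distribution)" by (simp add: Zc_distr[OF k])
  also have "\<dots> = 0" by (rule integral_std_normal_distribution_moment_odd) simp
  finally show "(\<integral>\<omega>. Z k \<omega> $ i \<partial>M) = 0" .
qed

lemma Z_m2:
  assumes k: "k \<ge> 1"
  shows "(\<integral>\<^sup>+\<omega>. ennreal (norm (Z k \<omega>)^2) \<partial>M) = ennreal (real CARD('d))"
proof -
  have "(\<integral>\<^sup>+\<omega>. ennreal (norm (Z k \<omega>)^2) \<partial>M) = (\<integral>\<^sup>+\<omega>. (\<Sum>i\<in>UNIV. ennreal ((Z k \<omega> $ i)^(2*1))) \<partial>M)"
    by (simp add: norm_sq_vec sum_ennreal)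
  also have "\<dots> = (\<Sum>i\<in>UNIV. (\<integral>\<^sup>+\<omega>. ennreal ((Z k \<omega> $ i)^(2*1)) \<partial>M))"
    by (rule nn_integral_sum) (use Zc_meas in auto)
  also have "\<dots> = (\<Sum>i\<in>(UNIV::'d set). ennreal 1)"
    by (simp only: Zc_mom_even[OF k]) simp
  finally show ?thesis by (simp add: ennreal_of_nat_eq_real_of_nat)
qed

lemma Z_m4:
  assumes k: "k \<ge> 1"
  shows "(\<integral>\<^sup>+\<omega>. ennreal (norm (Z k \<omega>)^4) \<partial>M) \<le> ennreal (3 * real CARD('d)^2)"
proof -
  have pw: "norm (z::real^'d)^4 \<le> real CARD('d) * (\<Sum>i\<in>UNIV. (z $ i)^(2*2))" for z
  proof -
    have "norm z^4 = (\<Sum>i\<in>UNIV. (z $ i)^2)^2" by (simp flip: norm_sq_vec power_mult)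
    also have "\<dots> \<le> (\<Sum>i\<in>UNIV. ((z $ i)^2)^2) * real CARD('d)" by (rule sum_squared_le_sum_of_squares)
    finally show ?thesis by (simp add: mult.commute flip: power_mult)
  qed
  have "(\<integral>\<^sup>+\<omega>. ennreal (norm (Z k \<omega>)^4) \<partial>M) \<le> (\<integral>\<^sup>+\<omega>. ennreal (real CARD('d)) * (\<Sum>i\<in>UNIV. ennreal ((Z k \<omega> $ i)^(2*2))) \<partial>M)"
    apply (rule nn_integral_mono)
    using pw by (simp add: sum_ennreal ennreal_mult[symmetric] sum_nonneg)
  also have "\<dots> = ennreal (real CARD('d)) * (\<Sum>i\<in>UNIV. (\<integral>\<^sup>+\<omega>. ennreal ((Z k \<omega> $ i)^(2*2)) \<partial>M))"
  proof -
    have m: "(\<lambda>\<omega>. ennreal ((Z k \<omega> $ i)^(2*2))) \<in> borel_measurable M" for i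
      using Zc_meas[of k i] by measurable
    have "(\<integral>\<^sup>+\<omega>. (\<Sum>i\<in>UNIV. ennreal ((Z k \<omega> $ i)^(2*2))) \<partial>M) = (\<Sum>i\<in>UNIV. (\<integral>\<^sup>+\<omega>. ennreal ((Z k \<omega> $ i)^(2*2)) \<partial>M))"
      by (rule nn_integral_sum) (use m in auto)
    moreover have "(\<integral>\<^sup>+\<omega>. ennreal (real CARD('d)) * (\<Sum>i\<in>UNIV. ennreal ((Z k \<omega> $ i)^(2*2))) \<partial>M)
       = ennreal (real CARD('d)) * (\<integral>\<^sup>+\<omega>. (\<Sum>i\<in>UNIV. ennreal ((Z k \<omega> $ i)^(2*2))) \<partial>M)"
      by (rule nn_integral_cmult) (use m in auto)
    ultimately show ?thesis by simp
  qed
  also have "\<dots> = ennreal (real CARD('d)) * (\<Sum>i\<in>(UNIV::'d set). ennreal 3)"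
    by (simp only: Zc_mom_even[OF k]) (simp add: fact_numeral)
  also have "\<dots> = ennreal (3 * real CARD('d)^2)"
  proof -
    have "(\<Sum>i\<in>(UNIV::'d set). ennreal 3) = ennreal (real CARD('d) * 3)"
      by (subst sum_ennreal) auto
    then show ?thesis by (simp add: ennreal_mult[symmetric] mult_ac power2_eq_square)
  qed
  finally show ?thesis .
qed

lemma Z_inner:
  assumes k: "k \<ge> 1"
  shows "integrable M (\<lambda>\<omega>. inner v (Z k \<omega>))" "(\<integral>\<omega>. inner v (Z k \<omega>) \<partial>M) = 0"
  unfolding inner_vec_sum using Zc_int[OF k] by auto

end


lemma amgm: "0 < e \<Longrightarrow> x * q \<le> e/2 * x^2 + q^2 / (2*e)" for x q e :: real
proof -
  assume e: "0 < e"
  have "0 \<le> (e * x - q)^2 / (2*e)" using e by simp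
  also have "(e * x - q)^2 / (2*e) = e/2 * x^2 + q^2 / (2*e) - x * q"
    using e by (simp add: power2_eq_square field_simps)
  finally show ?thesis by simp
qed

lemma realD:
  fixes t2 n2 p1 p2 \<sigma> \<tau> h K :: real
  assumes K: "0 < K" and h: "0 < h" "h * K \<le> 1" "h \<le> 1"
    and n: "0 \<le> n2" "n2 \<le> (1 - K*h) * t2" and t: "0 \<le> t2"
    and st: "0 \<le> \<sigma>" "0 \<le> \<tau>" and p: "0 \<le> p1" "0 \<le> p2"
  shows "n2^2 + 8*n2*(2*h^2*(\<sigma>*(1+p1) + \<sigma>*(1+p2))) + 3*(8*h^4*(\<tau>*(1+p1^2) + \<tau>*(1+p2^2)))
    \<le> (1 - K*h/2) * t2^2 + (1536*\<sigma>^2/K + 48*\<tau>)*h^3*(1 + p1^2 + p2^2)"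
proof -
  have kh: "0 \<le> 1 - K*h" "1 - K*h \<le> 1" using h K by (auto simp: mult.commute)
  have a: "n2^2 \<le> (1 - K*h) * t2^2"
  proof -
    have "n2^2 \<le> ((1 - K*h) * t2)^2" using n by (intro power_mono) auto
    also have "\<dots> = (1-K*h)^2 * t2^2" by (simp add: power_mult_distrib)
    also have "\<dots> \<le> (1 - K*h) * t2^2"
      using kh by (intro mult_right_mono) (auto simp: power2_eq_square intro: mult_left_le_one_le)
    finally show ?thesis .
  qed
  define Q where "Q = 2*h^2*(\<sigma>*(1+p1) + \<sigma>*(1+p2))"
  have Q0: "0 \<le> Q" unfolding Q_def using st p by auto
  have nt: "n2 \<le> t2" using n kh t by (meson mult_left_le_one_le order_trans)
  have b: "8*n2*Q \<le> K*h/2 * t2^2 + 32*Q^2/(K*h)"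
  proof -
    have "8*n2*Q \<le> 8*t2*Q" using nt Q0 by (simp add: mult_right_mono)
    also have "8*t2*Q = t2 * (8*Q)" by simp
    also have "\<dots> \<le> (K*h)/2 * t2^2 + (8*Q)^2/(2*(K*h))" by (rule amgm) (use K h in simp)
    also have "(8*Q)^2/(2*(K*h)) = 32*Q^2/(K*h)" by (simp add: power2_eq_square)
    finally show ?thesis by simp
  qed
  have S: "(2 + p1 + p2)^2 \<le> 12 * (1 + p1^2 + p2^2)"
  proof -
    have "0 \<le> (p1-p2)^2 + (p1-2)^2 + (p2-2)^2" by simp
    then have "(2 + p1 + p2)^2 \<le> 3*(4+p1^2+p2^2)" by (simp add: power2_eq_square algebra_simps)
    moreover have "3*(4+p1^2+p2^2) \<le> 12 * (1 + p1^2 + p2^2)" by simp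
    ultimately show ?thesis by linarith
  qed
  have c: "32*Q^2/(K*h) \<le> 1536*\<sigma>^2/K*h^3*(1 + p1^2 + p2^2)"
  proof -
    have "Q = 2*h^2*\<sigma>*(2+p1+p2)" unfolding Q_def by (simp add: algebra_simps)
    then have "32*Q^2/(K*h) = 128*\<sigma>^2/K*h^3*(2+p1+p2)^2"
      using K h by (simp add: power2_eq_square power3_eq_cube divide_simps)
    also have "\<dots> \<le> 128*\<sigma>^2/K*h^3*(12 * (1 + p1^2 + p2^2))"
      by (rule mult_left_mono[OF S]) (use K h in simp)
    also have "\<dots> = 1536*\<sigma>^2/K*h^3*(1 + p1^2 + p2^2)" by simp
    finally show ?thesis .
  qed
  have d: "3*(8*h^4*(\<tau>*(1+p1^2) + \<tau>*(1+p2^2))) \<le> 48*\<tau>*h^3*(1 + p1^2 + p2^2)"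
  proof -
    have "h^4 \<le> h^3" using h by (simp add: power_decreasing)
    have "3*(8*h^4*(\<tau>*(1+p1^2) + \<tau>*(1+p2^2))) = 24*\<tau>*h^4*(2 + p1^2 + p2^2)" by (simp add: algebra_simps)
    also have "\<dots> \<le> 24*\<tau>*h^3*(2*(1 + p1^2 + p2^2))"
      using \<open>h^4 \<le> h^3\<close> st h by (intro mult_mono) (auto intro: mult_left_mono)
    also have "\<dots> = 48*\<tau>*h^3*(1 + p1^2 + p2^2)" by simp
    finally show ?thesis .
  qed
  show ?thesis using a b c d unfolding Q_def by (simp add: algebra_simps)
qed

lemma realY:
  fixes p n2 \<sigma> \<tau> \<beta>2 dd h K c0 :: real
  defines "\<gamma> \<equiv> 8*\<sigma>*(1+c0) + 3*\<tau>"
  defines "\<alpha>1 \<equiv> 2*c0 + 16*\<beta>2*dd + 16*\<beta>2*dd*\<sigma>"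
  defines "\<alpha>0 \<equiv> c0^2 + 16*\<beta>2*dd*c0 + 16*\<beta>2*dd*\<sigma> + 9*\<beta>2^2*dd^2"
  assumes K: "0 < K" and h: "0 < h" "h * K \<le> 1" "h \<le> 1" "8*\<gamma>*h \<le> K"
    and n: "0 \<le> n2" "n2 \<le> (1 - K*h) * p + c0*h" and p: "0 \<le> p" and c0: "0 \<le> c0"
    and st: "0 \<le> \<sigma>" "0 \<le> \<tau>" "0 \<le> \<beta>2" "0 \<le> dd"
  shows "n2^2 + 8*n2*(h^2*(\<sigma>*(1+p))) + 3*(h^4*(\<tau>*(1+p^2))) + 8*(\<beta>2*h*dd)*(2*n2 + 2*(h^2*(\<sigma>*(1+p))))
     + 9*(\<beta>2^2*h^2*dd^2)
    \<le> (1 - K*h/2) * p^2 + (\<alpha>1^2/K + \<alpha>0 + 2*\<gamma>) * h"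
proof -
  have kh: "0 \<le> 1 - K*h" "1 - K*h \<le> 1" using h K by (auto simp: mult.commute)
  have h2: "h^2 \<le> h" "h^3 \<le> h" "h^4 \<le> h^2"
    using power_decreasing[of 1 2 h] power_decreasing[of 1 3 h] power_decreasing[of 2 4 h] h by auto
  have np: "n2 \<le> p + c0"
  proof -
    have "(1 - K*h) * p \<le> p" using kh p by (simp add: mult_left_le_one_le)
    moreover have "c0 * h \<le> c0" using c0 h mult_right_le_one_le[of c0 h] by simp
    ultimately show ?thesis using n by linarith
  qed
  have t1: "n2^2 \<le> (1-K*h)*p^2 + 2*c0*h*p + c0^2*h"
  proof -
    have "n2^2 \<le> ((1 - K*h) * p + c0*h)^2" using n by (intro power_mono) auto
    also have "\<dots> = (1-K*h)^2*p^2 + 2*(1-K*h)*c0*h*p + c0^2*h^2" by (simp add: power2_eq_square algebra_simps)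
    also have "\<dots> \<le> (1-K*h)*p^2 + 2*c0*h*p + c0^2*h"
    proof -
      have "(1-K*h)^2*p^2 \<le> (1-K*h)*p^2"
        using kh by (intro mult_right_mono) (auto simp: power2_eq_square intro: mult_left_le_one_le)
      moreover have "2*(1-K*h)*c0*h*p \<le> 2*c0*h*p"
        using kh c0 h p by (simp add: mult_left_le_one_le mult_right_mono)
      moreover have "c0^2*h^2 \<le> c0^2*h" using h2 by (simp add: mult_left_mono)
      ultimately show ?thesis by linarith
    qed
    finally show ?thesis .
  qed
  have t2: "8*n2*(h^2*(\<sigma>*(1+p))) \<le> h^2 * (8*\<sigma>*(1+c0)) * (1+p)^2"
  proof -
    have "8*n2*(h^2*(\<sigma>*(1+p))) \<le> 8*(p+c0)*(h^2*(\<sigma>*(1+p)))"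
      using np st p h by (intro mult_right_mono mult_left_mono) auto
    also have "(p + c0) \<le> (1+c0)*(1+p)" using p c0 by (simp add: algebra_simps)
    then have "8*(p+c0)*(h^2*(\<sigma>*(1+p))) \<le> 8*((1+c0)*(1+p))*(h^2*(\<sigma>*(1+p)))"
      using st p by (intro mult_right_mono mult_left_mono) auto
    also have "\<dots> = h^2 * (8*\<sigma>*(1+c0)) * (1+p)^2" by (simp add: power2_eq_square algebra_simps)
    finally show ?thesis .
  qed
  have t3: "3*(h^4*(\<tau>*(1+p^2))) \<le> h^2 * (3*\<tau>) * (1+p)^2"
  proof -
    have "3*(h^4*(\<tau>*(1+p^2))) \<le> 3*(h^2*(\<tau>*(1+p^2)))"
      using h2 st p by (intro mult_left_mono mult_right_mono) auto
    also have "\<dots> \<le> 3*(h^2*(\<tau>*(1+p)^2))"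
      using st p by (intro mult_left_mono) (auto simp: power2_eq_square algebra_simps)
    finally show ?thesis by (simp add: algebra_simps)
  qed
  have t4: "8*(\<beta>2*h*dd)*(2*n2) \<le> h*(16*\<beta>2*dd) * (p + c0)"
  proof -
    have "(h*(16*\<beta>2*dd)) * n2 \<le> (h*(16*\<beta>2*dd)) * (p + c0)"
      using np st h by (intro mult_left_mono) auto
    then show ?thesis by (simp add: algebra_simps)
  qed
  have t5: "8*(\<beta>2*h*dd)*(2*(h^2*(\<sigma>*(1+p)))) \<le> h*(16*\<beta>2*dd*\<sigma>)*(1+p)"
  proof -
    have "8*(\<beta>2*h*dd)*(2*(h^2*(\<sigma>*(1+p)))) = h^2 * (h*(16*\<beta>2*dd*\<sigma>)*(1+p))" by (simp add: algebra_simps power2_eq_square)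
    also have "\<dots> \<le> 1 * (h*(16*\<beta>2*dd*\<sigma>)*(1+p))"
      using h2 h st p by (intro mult_right_mono) (auto simp: power_le_one)
    finally show ?thesis by simp
  qed
  have t6: "9*(\<beta>2^2*h^2*dd^2) \<le> 9*\<beta>2^2*dd^2*h"
  proof -
    have "(9*\<beta>2^2*dd^2)*h^2 \<le> (9*\<beta>2^2*dd^2)*h" using h2 by (intro mult_left_mono) auto
    then show ?thesis by (simp add: algebra_simps)
  qed
  have g: "h^2*\<gamma>*(1+p)^2 \<le> K/4*h*p^2 + 2*\<gamma>*h"
  proof -
    have g0: "0 \<le> \<gamma>" unfolding \<gamma>_def using st c0 by auto
    have "0 \<le> (p - 1)^2" by simp
    then have "(1+p)^2 \<le> 2 + 2*p^2" by (simp add: power2_eq_square algebra_simps)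
    then have "h^2*\<gamma>*(1+p)^2 \<le> h^2*\<gamma>*(2 + 2*p^2)" using g0 by (intro mult_left_mono) auto
    also have "\<dots> = 2*\<gamma>*h^2 + (2*\<gamma>*h)*h*p^2" by (simp add: algebra_simps power2_eq_square)
    also have "(2*\<gamma>*h)*h*p^2 \<le> (K/4)*h*p^2"
    proof -
      have "2*\<gamma>*h \<le> K/4" using h(4) by simp
      then have "(2*\<gamma>*h)*(h*p^2) \<le> (K/4)*(h*p^2)" using h p by (intro mult_right_mono) auto
      then show ?thesis by (simp add: mult.assoc)
    qed
    also have "2*\<gamma>*h^2 \<le> 2*\<gamma>*h" using h2 g0 by (simp add: mult_left_mono)
    finally show ?thesis by simp
  qed
  have lin: "h*\<alpha>1*p \<le> K/4*h*p^2 + \<alpha>1^2/K*h"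
  proof -
    have "p * \<alpha>1 \<le> (K/2)/2 * p^2 + \<alpha>1^2/(2*(K/2))" by (rule amgm) (use K in simp)
    then have "h*(p*\<alpha>1) \<le> h*((K/2)/2 * p^2 + \<alpha>1^2/(2*(K/2)))" using h by (simp add: mult_left_mono)
    then show ?thesis by (simp add: algebra_simps)
  qed
  have "n2^2 + 8*n2*(h^2*(\<sigma>*(1+p))) + 3*(h^4*(\<tau>*(1+p^2))) + 8*(\<beta>2*h*dd)*(2*n2 + 2*(h^2*(\<sigma>*(1+p))))
     + 9*(\<beta>2^2*h^2*dd^2)
     \<le> (1-K*h)*p^2 + h*\<alpha>1*p + \<alpha>0*h + h^2*\<gamma>*(1+p)^2"
  proof -
    have e: "8*(\<beta>2*h*dd)*(2*n2 + 2*(h^2*(\<sigma>*(1+p)))) = 8*(\<beta>2*h*dd)*(2*n2) + 8*(\<beta>2*h*dd)*(2*(h^2*(\<sigma>*(1+p))))"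
      by (simp add: distrib_left)
    have e2: "(1-K*h)*p^2 + 2*c0*h*p + c0^2*h + h^2 * (8*\<sigma>*(1+c0)) * (1+p)^2 + h^2 * (3*\<tau>) * (1+p)^2
       + h*(16*\<beta>2*dd) * (p + c0) + h*(16*\<beta>2*dd*\<sigma>)*(1+p) + 9*\<beta>2^2*dd^2*h
       = (1-K*h)*p^2 + h*\<alpha>1*p + \<alpha>0*h + h^2*\<gamma>*(1+p)^2"
      unfolding \<alpha>1_def \<alpha>0_def \<gamma>_def by (simp add: algebra_simps)
    show ?thesis using t1 t2 t3 t4 t5 t6 e e2 by linarith
  qed
  also have "\<dots> \<le> (1 - K*h/2) * p^2 + (\<alpha>1^2/K + \<alpha>0 + 2*\<gamma>) * h"
  proof -
    have "(1 - K*h/2) * p^2 = (1-K*h)*p^2 + K/4*h*p^2 + K/4*h*p^2" by (simp add: algebra_simps)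
    moreover have "(\<alpha>1^2/K + \<alpha>0 + 2*\<gamma>) * h = \<alpha>1^2/K*h + \<alpha>0*h + 2*\<gamma>*h" by (simp add: algebra_simps)
    ultimately show ?thesis using g lin by linarith
  qed
  finally show ?thesis .
qed


lemma norm_diff_sq: "norm (x - y)^2 \<le> 2 * (norm x^2 + norm (y::'a::real_normed_vector)^2)"
proof -
  have "norm (x - y) \<le> norm x + norm y" by (rule norm_triangle_ineq4)
  then have "norm (x - y)^2 \<le> (norm x + norm y)^2" by (intro power_mono) auto
  also have "\<dots> \<le> 2 * (norm x^2 + norm y^2)"
  proof -
    have "0 \<le> (norm x - norm y)^2" by simp
    then show ?thesis by (simp add: power2_eq_square algebra_simps)
  qed
  finally show ?thesis .
qed

lemma norm_diff_4: "norm (x - y)^4 \<le> 8 * (norm x^4 + norm (y::'a::real_normed_vector)^4)"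
proof -
  have "norm (x - y)^4 = (norm (x - y)^2)^2" by (simp flip: power_mult)
  also have "\<dots> \<le> (2 * (norm x^2 + norm y^2))^2" by (intro power_mono norm_diff_sq) auto
  also have "\<dots> \<le> 8 * (norm x^4 + norm y^4)"
  proof -
    define P where "P = norm x^2"
    define Q where "Q = norm y^2"
    have "0 \<le> (P - Q)^2" by simp
    then have "(2*(P+Q))^2 \<le> 8*(P^2+Q^2)" by (simp add: power2_eq_square algebra_simps)
    moreover have "P^2 = norm x^4" "Q^2 = norm y^4" unfolding P_def Q_def by (simp_all flip: power_mult)
    ultimately show ?thesis unfolding P_def Q_def by simp
  qed
  finally show ?thesis .
qed

lemma norm_add_sq: "norm (x + y)^2 \<le> 2 * (norm x^2 + norm (y::'a::real_normed_vector)^2)"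
  using norm_diff_sq[of x "-y"] by simp

lemma nn_two:
  assumes F: "\<And>x. F x \<le> c * (f x + g x)" and c: "0 \<le> c"
    and f: "f \<in> borel_measurable N" "\<And>x. 0 \<le> f x" and g: "g \<in> borel_measurable N" "\<And>x. 0 \<le> g x"
    and fA: "(\<integral>\<^sup>+x. ennreal (f x) \<partial>N) \<le> ennreal A" and gB: "(\<integral>\<^sup>+x. ennreal (g x) \<partial>N) \<le> ennreal B"
    and AB: "0 \<le> A" "0 \<le> B"
  shows "(\<integral>\<^sup>+x. ennreal (F x) \<partial>N) \<le> ennreal (c * (A + B))"
proof -
  have "(\<integral>\<^sup>+x. ennreal (F x) \<partial>N) \<le> (\<integral>\<^sup>+x. ennreal c * (ennreal (f x) + ennreal (g x)) \<partial>N)"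
  proof (rule nn_integral_mono)
    fix x
    have "ennreal c * (ennreal (f x) + ennreal (g x)) = ennreal (c * (f x + g x))"
      using c f(2)[of x] g(2)[of x] by (simp add: ennreal_mult ennreal_plus)
    then show "ennreal (F x) \<le> ennreal c * (ennreal (f x) + ennreal (g x))"
      using F[of x] by (simp add: ennreal_leI)
  qed
  also have "\<dots> = ennreal c * ((\<integral>\<^sup>+x. ennreal (f x) \<partial>N) + (\<integral>\<^sup>+x. ennreal (g x) \<partial>N))"
  proof -
    have fm: "(\<lambda>x. ennreal (f x)) \<in> borel_measurable N" and gm: "(\<lambda>x. ennreal (g x)) \<in> borel_measurable N"
      using f g by auto
    have "(\<integral>\<^sup>+x. ennreal c * (ennreal (f x) + ennreal (g x)) \<partial>N) = ennreal c * (\<integral>\<^sup>+x. (ennreal (f x) + ennreal (g x)) \<partial>N)"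
      by (rule nn_integral_cmult) (use fm gm in auto)
    also have "(\<integral>\<^sup>+x. (ennreal (f x) + ennreal (g x)) \<partial>N) = (\<integral>\<^sup>+x. ennreal (f x) \<partial>N) + (\<integral>\<^sup>+x. ennreal (g x) \<partial>N)"
      by (rule nn_integral_add) (use fm gm in auto)
    finally show ?thesis .
  qed
  also have "\<dots> \<le> ennreal c * (ennreal A + ennreal B)"
    by (intro mult_left_mono add_mono fA gB) auto
  also have "\<dots> = ennreal (c * (A + B))" using c AB by (simp add: ennreal_mult)
  finally show ?thesis .
qed

context L6 begin

definition kp :: real where "kp = max \<kappa> 0"
lemma kp0: "0 \<le> kp" unfolding kp_def by simp

definition law :: "nat \<Rightarrow> (real^'n \<Rightarrow> real^'n) \<Rightarrow> bool" where
  "law s phi \<longleftrightarrow> s \<ge> 1 \<and> phi \<in> borel_measurable borel \<and> distr (\<mu> (2 * s)) borel phi = \<mu> s"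

lemma lawA: "s \<ge> 1 \<Longrightarrow> law s (phiA s)" unfolding law_def using A8_meas1 A8_law1 by auto
lemma lawB: "s \<ge> 1 \<Longrightarrow> law s (phiB s)" unfolding law_def using A8_meas2 A8_law2 by auto

lemma b_meas1: "b x \<in> borel_measurable borel"
  using b_comp_meas[of "\<lambda>_. x" borel "\<lambda>u. u"] by simp

lemma law_meas: assumes l: "law s phi" shows "phi \<in> measurable (\<mu> (2 * s)) borel"
proof -
  have s: "s \<ge> 1" "phi \<in> borel_measurable borel" using l unfolding law_def by auto
  have "sets (\<mu> (2 * s)) = sets borel" using s by (intro mu_sets) simp
  from measurable_cong_sets[OF this refl, of borel] s(2) show ?thesis by blast
qed

lemma law_nn:
  assumes l: "law s phi" and g: "g \<in> borel_measurable borel"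
  shows "(\<integral>\<^sup>+u. g (phi u) \<partial>\<mu> (2 * s)) = (\<integral>\<^sup>+v. g v \<partial>\<mu> s)"
proof -
  have "(\<integral>\<^sup>+v. g v \<partial>\<mu> s) = (\<integral>\<^sup>+v. g v \<partial>(distr (\<mu> (2 * s)) borel phi))"
    using l unfolding law_def by simp
  also have "\<dots> = (\<integral>\<^sup>+u. g (phi u) \<partial>\<mu> (2 * s))"
    by (rule nn_integral_distr[OF law_meas[OF l]]) (simp add: g)
  finally show ?thesis by simp
qed

lemma law_int:
  fixes g :: "real^'n \<Rightarrow> real^'d"
  assumes l: "law s phi" and g: "g \<in> borel_measurable borel" and gi: "integrable (\<mu> s) g"
  shows "integrable (\<mu> (2 * s)) (\<lambda>u. g (phi u))" "(\<integral>u. g (phi u) \<partial>\<mu> (2 * s)) = (\<integral>v. g v \<partial>\<mu> s)"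
proof -
  have e: "\<mu> s = distr (\<mu> (2 * s)) borel phi" using l unfolding law_def by simp
  have gi': "integrable (distr (\<mu> (2 * s)) borel phi) g" using gi by (subst e[symmetric])
  show "integrable (\<mu> (2 * s)) (\<lambda>u. g (phi u))"
    using integrable_distr_eq[OF law_meas[OF l] g] gi' by blast
  show "(\<integral>u. g (phi u) \<partial>\<mu> (2 * s)) = (\<integral>v. g v \<partial>\<mu> s)"
    using integral_distr[OF law_meas[OF l] g] by (subst e) (rule sym)
qed

lemma xi2:
  assumes l: "law s phi"
  shows "(\<integral>\<^sup>+u. ennreal (norm (b x (phi u) - a x)^2) \<partial>\<mu> (2 * s)) \<le> ennreal (kp / real s * (1 + norm x^2))"
proof -
  have s: "s \<ge> 1" using l unfolding law_def by simp
  have "(\<integral>\<^sup>+u. ennreal (norm (b x (phi u) - a x)^2) \<partial>\<mu> (2 * s)) = (\<integral>\<^sup>+v. ennreal (norm (b x v - a x)^2) \<partial>\<mu> s)"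
    by (rule law_nn[OF l, where g="\<lambda>v. ennreal (norm (b x v - a x)^2)"]) (use b_meas1 in measurable)
  also have "\<dots> \<le> ennreal (\<kappa> / real s * (1 + norm x^2))" by (rule A3[OF s])
  also have "\<dots> \<le> ennreal (kp / real s * (1 + norm x^2))"
  proof -
    have "\<kappa> / real s \<le> kp / real s" by (rule divide_right_mono) (auto simp: kp_def)
    then have "\<kappa> / real s * (1 + norm x^2) \<le> kp / real s * (1 + norm x^2)" by (rule mult_right_mono) simp
    then show ?thesis by (rule ennreal_leI)
  qed
  finally show ?thesis .
qed

lemma xi4:
  assumes l: "law s phi"
  shows "(\<integral>\<^sup>+u. ennreal (norm (b x (phi u) - a x)^4) \<partial>\<mu> (2 * s)) \<le> ennreal (kp / (real s)^2 * (1 + norm x^4))"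
proof -
  have s: "s \<ge> 1" using l unfolding law_def by simp
  have "(\<integral>\<^sup>+u. ennreal (norm (b x (phi u) - a x)^4) \<partial>\<mu> (2 * s)) = (\<integral>\<^sup>+v. ennreal (norm (b x v - a x)^4) \<partial>\<mu> s)"
    by (rule law_nn[OF l, where g="\<lambda>v. ennreal (norm (b x v - a x)^4)"]) (use b_meas1 in measurable)
  also have "\<dots> \<le> ennreal (\<kappa> / (real s)^2 * (1 + norm x^4))" by (rule A4[OF s])
  also have "\<dots> \<le> ennreal (kp / (real s)^2 * (1 + norm x^4))"
  proof -
    have "\<kappa> / (real s)^2 \<le> kp / (real s)^2" by (rule divide_right_mono) (auto simp: kp_def)
    then have "\<kappa> / (real s)^2 * (1 + norm x^4) \<le> kp / (real s)^2 * (1 + norm x^4)" by (rule mult_right_mono) simp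
    then show ?thesis by (rule ennreal_leI)
  qed
  finally show ?thesis .
qed

lemma b_phi_int:
  assumes l: "law s phi"
  shows "integrable (\<mu> (2 * s)) (\<lambda>u. b x (phi u))" "(\<integral>u. b x (phi u) \<partial>\<mu> (2 * s)) = a x"
proof -
  have s: "s \<ge> 1" using l unfolding law_def by simp
  show "integrable (\<mu> (2 * s)) (\<lambda>u. b x (phi u))"
    by (rule law_int[OF l b_meas1 unbiased_int[OF s]])
  show "(\<integral>u. b x (phi u) \<partial>\<mu> (2 * s)) = a x"
    using law_int(2)[OF l b_meas1 unbiased_int[OF s]] unbiased[OF s] by simp
qed

end


lemma norm_scaleR_pow: "norm (c *\<^sub>R x)^n = \<bar>c\<bar>^n * norm x^n"
  by (simp add: power_mult_distrib)

context L6 begin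

lemma A_D:
  assumes h: "0 < h" "h * L^2 \<le> K"
  shows "norm ((y1 - y2) + h *\<^sub>R (a y1 - a y2))^2 \<le> (1 - K*h) * norm (y1 - y2)^2"
proof -
  define d where "d = y1 - y2"
  define D where "D = a y1 - a y2"
  have e: "norm (d + h *\<^sub>R D)^2 = norm d^2 + 2*h*inner d D + h^2 * norm D^2"
  proof -
    have "norm (d + h *\<^sub>R D)^2 = inner (d + h *\<^sub>R D) (d + h *\<^sub>R D)" by (simp only: power2_norm_eq_inner)
    also have "\<dots> = inner d d + 2*h*inner d D + h^2 * inner D D"
      by (simp add: inner_add_left inner_add_right inner_commute power2_eq_square algebra_simps)
    finally show ?thesis by (simp only: power2_norm_eq_inner)
  qed
  have i: "inner d D \<le> -K * norm d^2" unfolding d_def D_def by (rule A1_mono)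
  have n: "norm D \<le> L * norm d" unfolding d_def D_def by (rule A1_lip)
  have n2: "norm D^2 \<le> L^2 * norm d^2"
  proof -
    have "norm D^2 \<le> (L * norm d)^2" using n by (intro power_mono) auto
    then show ?thesis by (simp add: power_mult_distrib)
  qed
  have "norm (d + h *\<^sub>R D)^2 \<le> norm d^2 + 2*h*(-K * norm d^2) + h^2 * (L^2 * norm d^2)"
    unfolding e using i n2 h by (intro add_mono mult_left_mono) auto
  also have "\<dots> = norm d^2 * (1 - 2*K*h + h * (h*L^2))" by (simp add: algebra_simps power2_eq_square)
  also have "\<dots> \<le> norm d^2 * (1 - K*h)"
  proof -
    have "h * (h*L^2) \<le> h * K" using h by (intro mult_left_mono) (auto simp: mult.commute)
    then show ?thesis by (intro mult_left_mono) (auto simp: algebra_simps)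
  qed
  finally show ?thesis unfolding d_def D_def by (simp add: mult.commute)
qed

lemma D_point:
  assumes s: "s \<ge> 1" and h: "0 < h" "h*K \<le> 1" "h \<le> 1" "h * L^2 \<le> K"
  shows "(\<integral>\<^sup>+u. ennreal (norm ((y1 + h *\<^sub>R b y1 (phiB s u)) - (y2 + h *\<^sub>R b y2 (phiA s u)))^4) \<partial>\<mu> (2 * s))
    \<le> ennreal ((1 - K*h/2) * norm (y1-y2)^4 + (1536*(kp/real s)^2/K + 48*(kp/(real s)^2))*h^3*(1 + norm y1^4 + norm y2^4))"
proof -
  interpret P: prob_space "\<mu> (2 * s)" using mu_prob s by simp
  have lA: "law s (phiA s)" and lB: "law s (phiB s)" using lawA lawB s by auto
  define A where "A = (y1 - y2) + h *\<^sub>R (a y1 - a y2)"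
  define \<xi>1 where "\<xi>1 u = b y1 (phiB s u) - a y1" for u
  define \<xi>2 where "\<xi>2 u = b y2 (phiA s u) - a y2" for u
  define B where "B u = h *\<^sub>R (\<xi>1 u - \<xi>2 u)" for u
  define \<sigma> where "\<sigma> = kp / real s"
  define \<tau> where "\<tau> = kp / (real s)^2"
  have st: "0 \<le> \<sigma>" "0 \<le> \<tau>" unfolding \<sigma>_def \<tau>_def using kp0 by auto
  have eq: "(y1 + h *\<^sub>R b y1 (phiB s u)) - (y2 + h *\<^sub>R b y2 (phiA s u)) = A + B u" for u
    unfolding A_def B_def \<xi>1_def \<xi>2_def by (simp add: algebra_simps)
  have m1: "(\<lambda>u. b y1 (phiB s u)) \<in> borel_measurable (\<mu> (2 * s))"
    using measurable_compose[OF law_meas[OF lB] b_meas1] by simp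
  have m2: "(\<lambda>u. b y2 (phiA s u)) \<in> borel_measurable (\<mu> (2 * s))"
    using measurable_compose[OF law_meas[OF lA] b_meas1] by simp
  have xm: "\<xi>1 \<in> borel_measurable (\<mu> (2 * s))" "\<xi>2 \<in> borel_measurable (\<mu> (2 * s))"
    unfolding \<xi>1_def[abs_def] \<xi>2_def[abs_def] using m1 m2 by auto
  have Bm: "B \<in> borel_measurable (\<mu> (2 * s))" unfolding B_def[abs_def] using xm by auto
  have xi: "integrable (\<mu> (2 * s)) \<xi>1" "integrable (\<mu> (2 * s)) \<xi>2"
    unfolding \<xi>1_def[abs_def] \<xi>2_def[abs_def] using b_phi_int(1)[OF lA] b_phi_int(1)[OF lB] by auto
  have xint: "(\<integral>u. \<xi>1 u \<partial>\<mu> (2 * s)) = 0" "(\<integral>u. \<xi>2 u \<partial>\<mu> (2 * s)) = 0"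
    unfolding \<xi>1_def[abs_def] \<xi>2_def[abs_def]
    using b_phi_int[OF lA] b_phi_int[OF lB] by (simp_all add: P.prob_space)
  have Bi: "integrable (\<mu> (2 * s)) B" unfolding B_def[abs_def] using xi by auto
  have Bint: "(\<integral>u. B u \<partial>\<mu> (2 * s)) = 0" unfolding B_def[abs_def] using xi xint by simp
  have mean1: "integrable (\<mu> (2 * s)) (\<lambda>u. inner A (B u))" by (rule integrable_inner_right) (rule Bi)
  have mean2: "(\<integral>u. inner A (B u) \<partial>\<mu> (2 * s)) = 0"
    using integral_inner_right[of A "\<mu> (2 * s)" B] Bi Bint by simp
  have Bsq: "norm (B u)^2 \<le> (2*h^2) * (norm (\<xi>1 u)^2 + norm (\<xi>2 u)^2)" for u
  proof -
    have "norm (B u)^2 = h^2 * norm (\<xi>1 u - \<xi>2 u)^2" unfolding B_def using h by (simp add: power_mult_distrib)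
    also have "\<dots> \<le> h^2 * (2 * (norm (\<xi>1 u)^2 + norm (\<xi>2 u)^2))" by (intro mult_left_mono norm_diff_sq) auto
    finally show ?thesis by (simp add: algebra_simps)
  qed
  have B4: "norm (B u)^4 \<le> (8*h^4) * (norm (\<xi>1 u)^4 + norm (\<xi>2 u)^4)" for u
  proof -
    have "norm (B u)^4 = h^4 * norm (\<xi>1 u - \<xi>2 u)^4" unfolding B_def using h by (simp add: power_mult_distrib)
    also have "\<dots> \<le> h^4 * (8 * (norm (\<xi>1 u)^4 + norm (\<xi>2 u)^4))" by (intro mult_left_mono norm_diff_4) auto
    finally show ?thesis by (simp add: algebra_simps)
  qed
  have q2: "(\<integral>\<^sup>+u. ennreal (norm (B u)^2) \<partial>\<mu> (2 * s)) \<le> ennreal ((2*h^2) * (\<sigma>*(1+norm y1^2) + \<sigma>*(1+norm y2^2)))"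
  proof (rule nn_two[OF Bsq])
    show "(\<integral>\<^sup>+u. ennreal (norm (\<xi>1 u)^2) \<partial>\<mu> (2 * s)) \<le> ennreal (\<sigma>*(1+norm y1^2))"
      unfolding \<xi>1_def \<sigma>_def using xi2[OF lB] by simp
    show "(\<integral>\<^sup>+u. ennreal (norm (\<xi>2 u)^2) \<partial>\<mu> (2 * s)) \<le> ennreal (\<sigma>*(1+norm y2^2))"
      unfolding \<xi>2_def \<sigma>_def using xi2[OF lA] by simp
  qed (use xm st in auto)
  have q4: "(\<integral>\<^sup>+u. ennreal (norm (B u)^4) \<partial>\<mu> (2 * s)) \<le> ennreal ((8*h^4) * (\<tau>*(1+norm y1^4) + \<tau>*(1+norm y2^4)))"
  proof (rule nn_two[OF B4])
    show "(\<integral>\<^sup>+u. ennreal (norm (\<xi>1 u)^4) \<partial>\<mu> (2 * s)) \<le> ennreal (\<tau>*(1+norm y1^4))"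
      unfolding \<xi>1_def \<tau>_def using xi4[OF lB] by simp
    show "(\<integral>\<^sup>+u. ennreal (norm (\<xi>2 u)^4) \<partial>\<mu> (2 * s)) \<le> ennreal (\<tau>*(1+norm y2^4))"
      unfolding \<xi>2_def \<tau>_def using xi4[OF lA] by simp
  qed (use xm st in auto)
  have "(\<integral>\<^sup>+u. ennreal (norm ((y1 + h *\<^sub>R b y1 (phiB s u)) - (y2 + h *\<^sub>R b y2 (phiA s u)))^4) \<partial>\<mu> (2 * s))
     = (\<integral>\<^sup>+u. ennreal (norm (A + B u)^4) \<partial>\<mu> (2 * s))" by (simp only: eq)
  also have "\<dots> \<le> ennreal (norm A^4 + 8 * norm A^2 * ((2*h^2) * (\<sigma>*(1+norm y1^2) + \<sigma>*(1+norm y2^2)))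
        + 3 * ((8*h^4) * (\<tau>*(1+norm y1^4) + \<tau>*(1+norm y2^4))))"
    by (rule P.fourth_moment_step[OF Bm mean1 mean2 q2 q4]) (use st in auto)
  also have "\<dots> \<le> ennreal ((1 - K*h/2) * norm (y1-y2)^4 + (1536*\<sigma>^2/K + 48*\<tau>)*h^3*(1 + norm y1^4 + norm y2^4))"
  proof (rule ennreal_leI)
    have AD: "norm A^2 \<le> (1 - K*h) * norm (y1-y2)^2" unfolding A_def using h by (intro A_D) auto
    have r: "(norm A^2)^2 + 8*(norm A^2)*(2*h^2*(\<sigma>*(1+norm y1^2) + \<sigma>*(1+norm y2^2)))
       + 3*(8*h^4*(\<tau>*(1+(norm y1^2)^2) + \<tau>*(1+(norm y2^2)^2)))
      \<le> (1 - K*h/2) * (norm (y1-y2)^2)^2 + (1536*\<sigma>^2/K + 48*\<tau>)*h^3*(1 + (norm y1^2)^2 + (norm y2^2)^2)"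
      by (rule realD[OF A1_K h(1) h(2) h(3) _ AD _ st]) auto
    then show "norm A^4 + 8 * norm A^2 * ((2*h^2) * (\<sigma>*(1+norm y1^2) + \<sigma>*(1+norm y2^2)))
        + 3 * ((8*h^4) * (\<tau>*(1+norm y1^4) + \<tau>*(1+norm y2^4)))
      \<le> (1 - K*h/2) * norm (y1-y2)^4 + (1536*\<sigma>^2/K + 48*\<tau>)*h^3*(1 + norm y1^4 + norm y2^4)"
      by (simp flip: power_mult)
  qed
  finally show ?thesis unfolding \<sigma>_def \<tau>_def .
qed

end


lemma (in prob_space) nn_lin:
  assumes f: "f \<in> borel_measurable M" "\<And>x. 0 \<le> f x" and g: "g \<in> borel_measurable M" "\<And>x. 0 \<le> g x"
    and c: "0 \<le> c1" "0 \<le> c2" and X: "(\<integral>\<^sup>+x. ennreal (f x) \<partial>M) \<le> ennreal X" and Y: "(\<integral>\<^sup>+x. ennreal (g x) \<partial>M) \<le> ennreal Y"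
    and XY: "0 \<le> X" "0 \<le> Y"
  shows "(\<integral>\<^sup>+x. ennreal (f x + c1 * g x + c2) \<partial>M) \<le> ennreal (X + c1 * Y + c2)"
proof -
  have fm: "(\<lambda>x. ennreal (f x)) \<in> borel_measurable M" and gm: "(\<lambda>x. ennreal c1 * ennreal (g x)) \<in> borel_measurable M"
    using f g by auto
  have "(\<integral>\<^sup>+x. ennreal (f x + c1 * g x + c2) \<partial>M) = (\<integral>\<^sup>+x. (ennreal (f x) + ennreal c1 * ennreal (g x)) + ennreal c2 \<partial>M)"
    using f g c by (intro nn_integral_cong) (simp add: ennreal_plus ennreal_mult)
  also have "\<dots> = (\<integral>\<^sup>+x. (ennreal (f x) + ennreal c1 * ennreal (g x)) \<partial>M) + (\<integral>\<^sup>+x. ennreal c2 \<partial>M)"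
    by (rule nn_integral_add) (use fm gm in auto)
  also have "(\<integral>\<^sup>+x. (ennreal (f x) + ennreal c1 * ennreal (g x)) \<partial>M) = (\<integral>\<^sup>+x. ennreal (f x) \<partial>M) + (\<integral>\<^sup>+x. ennreal c1 * ennreal (g x) \<partial>M)"
    by (rule nn_integral_add) (use fm gm in auto)
  also have "(\<integral>\<^sup>+x. ennreal c1 * ennreal (g x) \<partial>M) = ennreal c1 * (\<integral>\<^sup>+x. ennreal (g x) \<partial>M)"
    by (rule nn_integral_cmult) (use g in auto)
  also have "(\<integral>\<^sup>+x. ennreal c2 \<partial>M) = ennreal c2" by (simp add: emeasure_space_1)
  also have "(\<integral>\<^sup>+x. ennreal (f x) \<partial>M) + ennreal c1 * (\<integral>\<^sup>+x. ennreal (g x) \<partial>M) + ennreal c2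
      \<le> ennreal X + ennreal c1 * ennreal Y + ennreal c2"
    by (intro add_mono mult_left_mono X Y) auto
  also have "\<dots> = ennreal (X + c1 * Y + c2)" using c XY by (simp add: ennreal_plus ennreal_mult)
  finally show ?thesis .
qed

context L6 begin

definition al0 :: real where "al0 = norm (a 0)"
definition c0 :: real where "c0 = 4*al0^2/K + 2*al0^2"
definition gam :: real where "gam = 8*kp*(1+c0) + 3*kp"
definition CY :: real where
  "CY = (2*c0 + 16*\<beta>^2*real CARD('d) + 16*\<beta>^2*real CARD('d)*kp)^2/K
     + (c0^2 + 16*\<beta>^2*real CARD('d)*c0 + 16*\<beta>^2*real CARD('d)*kp + 9*(\<beta>^2)^2*(real CARD('d))^2) + 2*gam"

lemma c0_nn: "0 \<le> c0" unfolding c0_def using A1_K by auto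

lemma A_Y:
  assumes h: "0 < h" "h \<le> 1" "4 * h * L^2 \<le> K"
  shows "norm (y + h *\<^sub>R a y)^2 \<le> (1 - K*h) * norm y^2 + c0 * h"
proof -
  define p where "p = norm y^2"
  have e: "norm (y + h *\<^sub>R a y)^2 = p + 2*h*inner y (a y) + h^2 * norm (a y)^2"
  proof -
    have "norm (y + h *\<^sub>R a y)^2 = inner (y + h *\<^sub>R a y) (y + h *\<^sub>R a y)" by (simp only: power2_norm_eq_inner)
    also have "\<dots> = inner y y + 2*h*inner y (a y) + h^2 * inner (a y) (a y)"
      by (simp add: inner_add_left inner_add_right inner_commute power2_eq_square algebra_simps)
    finally show ?thesis unfolding p_def by (simp only: power2_norm_eq_inner)
  qed
  have i: "inner y (a y) \<le> -K * p + norm y * al0"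
  proof -
    have "inner (y - 0) (a y - a 0) \<le> -K * (norm (y - 0))^2" by (rule A1_mono)
    moreover have "inner y (a 0) \<le> norm y * al0" unfolding al0_def by (rule norm_cauchy_schwarz)
    moreover have "inner y (a y) = inner (y - 0) (a y - a 0) + inner y (a 0)" by (simp add: inner_diff_right)
    ultimately show ?thesis unfolding p_def by simp
  qed
  have n: "norm (a y)^2 \<le> 2*L^2*p + 2*al0^2"
  proof -
    have "norm (a y) \<le> norm (a y - a 0) + norm (a 0)" using norm_triangle_ineq2[of "a y" "a 0"] by simp
    also have "norm (a y - a 0) \<le> L * norm (y - 0)" by (rule A1_lip)
    finally have "norm (a y) \<le> L * norm y + al0" unfolding al0_def by simp
    then have "norm (a y)^2 \<le> (L * norm y + al0)^2" by (intro power_mono) auto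
    also have "\<dots> \<le> 2 * ((L * norm y)^2 + al0^2)"
    proof -
      have "0 \<le> (L * norm y - al0)^2" by simp
      then show ?thesis by (simp add: power2_eq_square algebra_simps)
    qed
    finally show ?thesis unfolding p_def by (simp add: power_mult_distrib algebra_simps)
  qed
  have am: "norm y * (2*al0) \<le> K/4 * p + 4*al0^2/K"
  proof -
    have "norm y * (2*al0) \<le> (K/2)/2 * norm y^2 + (2*al0)^2/(2*(K/2))" by (rule amgm) (use A1_K in simp)
    then show ?thesis unfolding p_def by (simp add: power2_eq_square)
  qed
  have "norm (y + h *\<^sub>R a y)^2 \<le> p + 2*h*(-K * p + norm y * al0) + h^2 * (2*L^2*p + 2*al0^2)"
    unfolding e using i n h by (intro add_mono mult_left_mono) auto
  also have "\<dots> = p - 2*K*h*p + h*(norm y * (2*al0)) + h^2 * (2*L^2*p) + h^2*(2*al0^2)"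
    by (simp add: algebra_simps)
  also have "\<dots> \<le> p - 2*K*h*p + h*(K/4 * p + 4*al0^2/K) + h * (K/2 * p) + h*(2*al0^2)"
  proof -
    have 1: "h*(norm y * (2*al0)) \<le> h*(K/4 * p + 4*al0^2/K)" using am h by (intro mult_left_mono) auto
    have "h^2 * (2*L^2*p) = h * ((2*h*L^2)*p)" by (simp add: power2_eq_square algebra_simps)
    also have "\<dots> \<le> h * (K/2 * p)" using h unfolding p_def by (intro mult_left_mono mult_right_mono) auto
    finally have 2: "h^2 * (2*L^2*p) \<le> h * (K/2 * p)" .
    have 3: "h^2*(2*al0^2) \<le> h*(2*al0^2)"
      using h power_decreasing[of 1 2 h] by (intro mult_right_mono) auto
    show ?thesis using 1 2 3 by linarith
  qed
  also have "\<dots> \<le> (1 - K*h) * p + c0 * h"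
  proof -
    have "0 \<le> K*h*p" using A1_K h unfolding p_def by simp
    then show ?thesis unfolding c0_def by (simp add: algebra_simps)
  qed
  finally show ?thesis unfolding p_def .
qed


lemma Z_nn_scaled:
  assumes k: "k \<ge> 1"
  shows "(\<integral>\<^sup>+z. ennreal (norm (c *\<^sub>R z)^2) \<partial>(distr M borel (Z k))) = ennreal (c^2 * real CARD('d))"
    "(\<integral>\<^sup>+z. ennreal (norm (c *\<^sub>R z)^4) \<partial>(distr M borel (Z k))) \<le> ennreal (c^4 * (3 * real CARD('d)^2))"
proof -
  have "(\<integral>\<^sup>+z. ennreal (norm (c *\<^sub>R z)^2) \<partial>(distr M borel (Z k))) = (\<integral>\<^sup>+\<omega>. ennreal (norm (c *\<^sub>R Z k \<omega>)^2) \<partial>M)"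
    by (rule nn_integral_distr[OF Z_meas]) simp
  also have "\<dots> = (\<integral>\<^sup>+\<omega>. ennreal (c^2) * ennreal (norm (Z k \<omega>)^2) \<partial>M)"
    by (intro nn_integral_cong) (simp add: ennreal_mult[symmetric] power_mult_distrib)
  also have "\<dots> = ennreal (c^2) * (\<integral>\<^sup>+\<omega>. ennreal (norm (Z k \<omega>)^2) \<partial>M)"
    by (rule nn_integral_cmult) (use Z_meas[of k] in measurable)
  also have "\<dots> = ennreal (c^2 * real CARD('d))" by (simp add: Z_m2[OF k] ennreal_mult)
  finally show "(\<integral>\<^sup>+z. ennreal (norm (c *\<^sub>R z)^2) \<partial>(distr M borel (Z k))) = ennreal (c^2 * real CARD('d))" .
  have "(\<integral>\<^sup>+z. ennreal (norm (c *\<^sub>R z)^4) \<partial>(distr M borel (Z k))) = (\<integral>\<^sup>+\<omega>. ennreal (norm (c *\<^sub>R Z k \<omega>)^4) \<partial>M)"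
    by (rule nn_integral_distr[OF Z_meas]) simp
  also have "\<dots> = (\<integral>\<^sup>+\<omega>. ennreal (c^4) * ennreal (norm (Z k \<omega>)^4) \<partial>M)"
    by (intro nn_integral_cong) (simp add: ennreal_mult[symmetric] power_mult_distrib)
  also have "\<dots> = ennreal (c^4) * (\<integral>\<^sup>+\<omega>. ennreal (norm (Z k \<omega>)^4) \<partial>M)"
    by (rule nn_integral_cmult) (use Z_meas[of k] in measurable)
  also have "\<dots> \<le> ennreal (c^4) * ennreal (3 * real CARD('d)^2)" by (intro mult_left_mono Z_m4[OF k]) auto
  also have "\<dots> = ennreal (c^4 * (3 * real CARD('d)^2))" by (simp add: ennreal_mult)
  finally show "(\<integral>\<^sup>+z. ennreal (norm (c *\<^sub>R z)^4) \<partial>(distr M borel (Z k))) \<le> ennreal (c^4 * (3 * real CARD('d)^2))" .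
qed

lemma Z_mean_scaled:
  assumes k: "k \<ge> 1"
  shows "integrable (distr M borel (Z k)) (\<lambda>z. inner A (c *\<^sub>R z))"
    "(\<integral>z. inner A (c *\<^sub>R z) \<partial>(distr M borel (Z k))) = 0"
proof -
  have fm: "(\<lambda>z. inner A (c *\<^sub>R z)) \<in> borel_measurable borel" by simp
  have e: "(\<lambda>\<omega>. inner A (c *\<^sub>R Z k \<omega>)) = (\<lambda>\<omega>. inner (c *\<^sub>R A) (Z k \<omega>))" by (simp add: ext)
  have "integrable M (\<lambda>\<omega>. inner A (c *\<^sub>R Z k \<omega>))" unfolding e by (rule Z_inner(1)[OF k])
  then show "integrable (distr M borel (Z k)) (\<lambda>z. inner A (c *\<^sub>R z))"
    using integrable_distr_eq[OF Z_meas[of k] fm] by simp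
  have "(\<integral>z. inner A (c *\<^sub>R z) \<partial>(distr M borel (Z k))) = (\<integral>\<omega>. inner A (c *\<^sub>R Z k \<omega>) \<partial>M)"
    by (rule integral_distr[OF Z_meas[of k] fm])
  also have "\<dots> = (\<integral>\<omega>. inner (c *\<^sub>R A) (Z k \<omega>) \<partial>M)" by (simp only: e)
  also have "\<dots> = 0" by (rule Z_inner(2)[OF k])
  finally show "(\<integral>z. inner A (c *\<^sub>R z) \<partial>(distr M borel (Z k))) = 0" .
qed

end


context L6 begin

lemma Y_point:
  assumes l: "law s phi" and k: "k \<ge> 1"
    and h: "0 < h" "h*K \<le> 1" "h \<le> 1" "4*h*L^2 \<le> K" "8*gam*h \<le> K"
  shows "(\<integral>\<^sup>+u. (\<integral>\<^sup>+z. ennreal (norm (y + h *\<^sub>R b y (phi u) + (\<beta> * sqrt h) *\<^sub>R z)^4) \<partial>(distr M borel (Z k))) \<partial>\<mu> (2 * s))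
     \<le> ennreal ((1 - K*h/2) * norm y^4 + CY * h)"
proof -
  have s: "s \<ge> 1" using l unfolding law_def by simp
  interpret P: prob_space "\<mu> (2 * s)" using mu_prob s by simp
  interpret PZ: prob_space "distr M borel (Z k)" by (rule prob_space_distr) (rule Z_meas)
  define c where "c = \<beta> * sqrt h"
  define dd where "dd = real CARD('d)"
  define A where "A = y + h *\<^sub>R a y"
  define \<xi> where "\<xi> u = b y (phi u) - a y" for u
  define B where "B u = h *\<^sub>R \<xi> u" for u
  define p where "p = norm y^2"
  define n2 where "n2 = norm A^2"
  have c2: "c^2 = \<beta>^2 * h" unfolding c_def using h by (simp add: power_mult_distrib)
  have c4: "c^4 = (\<beta>^2)^2 * h^2" using c2 by (metis power_mult_distrib power_mult numeral_Bit0 numeral_One mult_2 one_add_one)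
  have dd0: "0 \<le> dd" unfolding dd_def by simp
  have eqA: "y + h *\<^sub>R b y (phi u) = A + B u" for u unfolding A_def B_def \<xi>_def by (simp add: algebra_simps)
  have inner: "(\<integral>\<^sup>+z. ennreal (norm (y + h *\<^sub>R b y (phi u) + c *\<^sub>R z)^4) \<partial>(distr M borel (Z k)))
      \<le> ennreal (norm (A + B u)^4 + (8*(\<beta>^2*h*dd)) * norm (A + B u)^2 + 9*((\<beta>^2)^2*h^2*dd^2))" for u
  proof -
    have "(\<integral>\<^sup>+z. ennreal (norm ((A + B u) + c *\<^sub>R z)^4) \<partial>(distr M borel (Z k)))
       \<le> ennreal (norm (A + B u)^4 + 8 * norm (A + B u)^2 * (c^2 * dd) + 3 * (c^4 * (3 * dd^2)))"
    proof (rule PZ.fourth_moment_step)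
      show "(\<lambda>z. c *\<^sub>R z) \<in> borel_measurable (distr M borel (Z k))" by simp
      show "integrable (distr M borel (Z k)) (\<lambda>z. inner (A + B u) (c *\<^sub>R z))" by (rule Z_mean_scaled(1)[OF k])
      show "(\<integral>z. inner (A + B u) (c *\<^sub>R z) \<partial>(distr M borel (Z k))) = 0" by (rule Z_mean_scaled(2)[OF k])
      show "(\<integral>\<^sup>+z. ennreal (norm (c *\<^sub>R z)^2) \<partial>(distr M borel (Z k))) \<le> ennreal (c^2 * dd)"
        unfolding dd_def by (rule eq_refl[OF Z_nn_scaled(1)[OF k]])
      show "(\<integral>\<^sup>+z. ennreal (norm (c *\<^sub>R z)^4) \<partial>(distr M borel (Z k))) \<le> ennreal (c^4 * (3 * dd^2))"
        unfolding dd_def by (rule Z_nn_scaled(2)[OF k])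
    qed (use dd0 in auto)
    then show ?thesis unfolding eqA c2 c4 by (simp add: algebra_simps)
  qed
  have lm: "(\<lambda>u. b y (phi u)) \<in> borel_measurable (\<mu> (2 * s))"
    using measurable_compose[OF law_meas[OF l] b_meas1] by simp
  have xm: "\<xi> \<in> borel_measurable (\<mu> (2 * s))" unfolding \<xi>_def[abs_def] using lm by auto
  have Bm: "B \<in> borel_measurable (\<mu> (2 * s))" unfolding B_def[abs_def] using xm by auto
  have xi: "integrable (\<mu> (2 * s)) \<xi>" unfolding \<xi>_def[abs_def] using b_phi_int(1)[OF l] by auto
  have xint: "(\<integral>u. \<xi> u \<partial>\<mu> (2 * s)) = 0" unfolding \<xi>_def[abs_def] using b_phi_int[OF l] by (simp add: P.prob_space)
  have Bi: "integrable (\<mu> (2 * s)) B" unfolding B_def[abs_def] using xi by auto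
  have Bint: "(\<integral>u. B u \<partial>\<mu> (2 * s)) = 0" unfolding B_def[abs_def] using xi xint by simp
  have mean1: "integrable (\<mu> (2 * s)) (\<lambda>u. inner A (B u))" by (rule integrable_inner_right) (rule Bi)
  have mean2: "(\<integral>u. inner A (B u) \<partial>\<mu> (2 * s)) = 0"
    using integral_inner_right[of A "\<mu> (2 * s)" B] Bi Bint by simp
  have s1: "1 \<le> real s" "1 \<le> (real s)^2" using s by auto
  have kps: "kp / real s \<le> kp" "kp / (real s)^2 \<le> kp"
    using divide_left_mono[OF s1(1) kp0] divide_left_mono[OF s1(2) kp0] s1 by auto
  have q2: "(\<integral>\<^sup>+u. ennreal (norm (B u)^2) \<partial>\<mu> (2 * s)) \<le> ennreal (h^2 * (kp * (1 + p)))"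
  proof -
    have "(\<integral>\<^sup>+u. ennreal (norm (B u)^2) \<partial>\<mu> (2 * s)) = (\<integral>\<^sup>+u. ennreal (h^2) * ennreal (norm (\<xi> u)^2) \<partial>\<mu> (2 * s))"
      unfolding B_def using h by (intro nn_integral_cong) (simp add: ennreal_mult[symmetric] power_mult_distrib)
    also have "\<dots> = ennreal (h^2) * (\<integral>\<^sup>+u. ennreal (norm (\<xi> u)^2) \<partial>\<mu> (2 * s))"
      by (rule nn_integral_cmult) (use xm in auto)
    also have "\<dots> \<le> ennreal (h^2) * ennreal (kp / real s * (1 + p))"
      unfolding \<xi>_def p_def by (intro mult_left_mono xi2[OF l]) auto
    also have "\<dots> \<le> ennreal (h^2) * ennreal (kp * (1 + p))"
      using kps p_def by (intro mult_left_mono ennreal_leI mult_right_mono) auto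
    also have "\<dots> = ennreal (h^2 * (kp * (1 + p)))" using kp0 by (simp add: ennreal_mult p_def)
    finally show ?thesis .
  qed
  have q4: "(\<integral>\<^sup>+u. ennreal (norm (B u)^4) \<partial>\<mu> (2 * s)) \<le> ennreal (h^4 * (kp * (1 + p^2)))"
  proof -
    have "(\<integral>\<^sup>+u. ennreal (norm (B u)^4) \<partial>\<mu> (2 * s)) = (\<integral>\<^sup>+u. ennreal (h^4) * ennreal (norm (\<xi> u)^4) \<partial>\<mu> (2 * s))"
      unfolding B_def using h by (intro nn_integral_cong) (simp add: ennreal_mult[symmetric] power_mult_distrib)
    also have "\<dots> = ennreal (h^4) * (\<integral>\<^sup>+u. ennreal (norm (\<xi> u)^4) \<partial>\<mu> (2 * s))"
      by (rule nn_integral_cmult) (use xm in auto)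
    also have "\<dots> \<le> ennreal (h^4) * ennreal (kp / (real s)^2 * (1 + p^2))"
    proof -
      have pp: "p^2 = norm y^4" unfolding p_def by (simp flip: power_mult)
      show ?thesis unfolding \<xi>_def pp by (intro mult_left_mono xi4[OF l]) auto
    qed
    also have "\<dots> \<le> ennreal (h^4) * ennreal (kp * (1 + p^2))"
      using kps p_def by (intro mult_left_mono ennreal_leI mult_right_mono) auto
    also have "\<dots> = ennreal (h^4 * (kp * (1 + p^2)))" using kp0 by (simp add: ennreal_mult p_def)
    finally show ?thesis .
  qed
  have X4: "(\<integral>\<^sup>+u. ennreal (norm (A + B u)^4) \<partial>\<mu> (2 * s))
     \<le> ennreal (n2^2 + 8 * n2 * (h^2 * (kp * (1 + p))) + 3 * (h^4 * (kp * (1 + p^2))))"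
  proof -
    have f1: "(\<integral>\<^sup>+u. ennreal (norm (A + B u)^4) \<partial>\<mu> (2 * s))
     \<le> ennreal (norm A^4 + 8 * norm A^2 * (h^2 * (kp * (1 + p))) + 3 * (h^4 * (kp * (1 + p^2))))"
      by (rule P.fourth_moment_step[OF Bm mean1 mean2 q2 q4]) (use kp0 p_def in auto)
    have e1: "norm A^4 + 8 * norm A^2 * (h^2 * (kp * (1 + p))) + 3 * (h^4 * (kp * (1 + p^2)))
       = n2^2 + 8 * n2 * (h^2 * (kp * (1 + p))) + 3 * (h^4 * (kp * (1 + p^2)))"
      unfolding n2_def by (simp flip: power_mult)
    show ?thesis using f1 unfolding e1 .
  qed
  have X2: "(\<integral>\<^sup>+u. ennreal (norm (A + B u)^2) \<partial>\<mu> (2 * s)) \<le> ennreal (2 * (n2 + h^2 * (kp * (1 + p))))"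
  proof (rule nn_two[where f="\<lambda>_. n2" and g="\<lambda>u. norm (B u)^2"])
    show "norm (A + B u)^2 \<le> 2 * (n2 + norm (B u)^2)" for u unfolding n2_def by (rule norm_add_sq)
    show "(\<integral>\<^sup>+u. ennreal n2 \<partial>\<mu> (2 * s)) \<le> ennreal n2" by (simp add: P.emeasure_space_1)
  qed (use Bm q2 kp0 p_def n2_def in auto)
  have "(\<integral>\<^sup>+u. (\<integral>\<^sup>+z. ennreal (norm (y + h *\<^sub>R b y (phi u) + (\<beta> * sqrt h) *\<^sub>R z)^4) \<partial>(distr M borel (Z k))) \<partial>\<mu> (2 * s))
     \<le> (\<integral>\<^sup>+u. ennreal (norm (A + B u)^4 + (8*(\<beta>^2*h*dd)) * norm (A + B u)^2 + 9*((\<beta>^2)^2*h^2*dd^2)) \<partial>\<mu> (2 * s))"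
    by (rule nn_integral_mono) (use inner in \<open>simp add: c_def\<close>)
  also have "\<dots> \<le> ennreal ((n2^2 + 8 * n2 * (h^2 * (kp * (1 + p))) + 3 * (h^4 * (kp * (1 + p^2))))
       + (8*(\<beta>^2*h*dd)) * (2 * (n2 + h^2 * (kp * (1 + p)))) + 9*((\<beta>^2)^2*h^2*dd^2))"
    by (rule P.nn_lin[OF _ _ _ _ _ _ X4 X2]) (use Bm h dd0 kp0 p_def n2_def in auto)
  also have "\<dots> \<le> ennreal ((1 - K*h/2) * norm y^4 + CY * h)"
  proof (rule ennreal_leI)
    have AY: "n2 \<le> (1 - K*h) * p + c0 * h" unfolding n2_def p_def A_def using h by (intro A_Y) auto
    have r: "n2^2 + 8*n2*(h^2*(kp*(1+p))) + 3*(h^4*(kp*(1+p^2))) + 8*(\<beta>^2*h*dd)*(2*n2 + 2*(h^2*(kp*(1+p))))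
     + 9*((\<beta>^2)^2*h^2*dd^2)
      \<le> (1 - K*h/2) * p^2 + ((2*c0 + 16*\<beta>^2*dd + 16*\<beta>^2*dd*kp)^2/K
         + (c0^2 + 16*\<beta>^2*dd*c0 + 16*\<beta>^2*dd*kp + 9*(\<beta>^2)^2*dd^2) + 2*(8*kp*(1+c0) + 3*kp)) * h"
      by (rule realY[OF A1_K h(1) h(2) h(3)]) (use h(5) AY c0_nn kp0 dd0 in \<open>auto simp: gam_def n2_def p_def\<close>)
    then show "(n2^2 + 8 * n2 * (h^2 * (kp * (1 + p))) + 3 * (h^4 * (kp * (1 + p^2))))
       + (8*(\<beta>^2*h*dd)) * (2 * (n2 + h^2 * (kp * (1 + p)))) + 9*((\<beta>^2)^2*h^2*dd^2)
       \<le> (1 - K*h/2) * norm y^4 + CY * h"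
      unfolding CY_def gam_def dd_def p_def by (simp add: algebra_simps flip: power_mult)
  qed
  finally show ?thesis .
qed

end


lemma (in prob_space) nn_split1:
  assumes f: "f \<in> borel_measurable M" "\<And>x. 0 \<le> f x" and ab: "0 \<le> \<alpha>" "0 \<le> \<gamma>"
  shows "(\<integral>\<^sup>+x. ennreal (\<alpha> * f x + \<gamma>) \<partial>M) = ennreal \<alpha> * (\<integral>\<^sup>+x. ennreal (f x) \<partial>M) + ennreal \<gamma>"
proof -
  have "(\<integral>\<^sup>+x. ennreal (\<alpha> * f x + \<gamma>) \<partial>M) = (\<integral>\<^sup>+x. ennreal \<alpha> * ennreal (f x) + ennreal \<gamma> \<partial>M)"
    using f ab by (intro nn_integral_cong) (simp add: ennreal_plus ennreal_mult)
  also have "\<dots> = (\<integral>\<^sup>+x. ennreal \<alpha> * ennreal (f x) \<partial>M) + (\<integral>\<^sup>+x. ennreal \<gamma> \<partial>M)"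
    by (rule nn_integral_add) (use f in auto)
  also have "(\<integral>\<^sup>+x. ennreal \<alpha> * ennreal (f x) \<partial>M) = ennreal \<alpha> * (\<integral>\<^sup>+x. ennreal (f x) \<partial>M)"
    by (rule nn_integral_cmult) (use f in auto)
  also have "(\<integral>\<^sup>+x. ennreal \<gamma> \<partial>M) = ennreal \<gamma>" by (simp add: emeasure_space_1)
  finally show ?thesis .
qed

lemma (in prob_space) nn_split3:
  assumes f: "f \<in> borel_measurable M" "\<And>x. 0 \<le> f x"
    and g1: "g1 \<in> borel_measurable M" "\<And>x. 0 \<le> g1 x"
    and g2: "g2 \<in> borel_measurable M" "\<And>x. 0 \<le> g2 x" and ab: "0 \<le> \<alpha>" "0 \<le> \<gamma>"
  shows "(\<integral>\<^sup>+x. ennreal (\<alpha> * f x + \<gamma> * (1 + g1 x + g2 x)) \<partial>M)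
    = ennreal \<alpha> * (\<integral>\<^sup>+x. ennreal (f x) \<partial>M) + ennreal \<gamma> * (1 + (\<integral>\<^sup>+x. ennreal (g1 x) \<partial>M) + (\<integral>\<^sup>+x. ennreal (g2 x) \<partial>M))"
proof -
  have m: "(\<lambda>x. ennreal (f x)) \<in> borel_measurable M" "(\<lambda>x. ennreal (g1 x)) \<in> borel_measurable M"
    "(\<lambda>x. ennreal (g2 x)) \<in> borel_measurable M" using f g1 g2 by auto
  have "(\<integral>\<^sup>+x. ennreal (\<alpha> * f x + \<gamma> * (1 + g1 x + g2 x)) \<partial>M)
     = (\<integral>\<^sup>+x. ennreal \<alpha> * ennreal (f x) + ennreal \<gamma> * (1 + ennreal (g1 x) + ennreal (g2 x)) \<partial>M)"
    using f g1 g2 ab by (intro nn_integral_cong) (simp add: ennreal_plus ennreal_mult)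
  also have "\<dots> = (\<integral>\<^sup>+x. ennreal \<alpha> * ennreal (f x) \<partial>M) + (\<integral>\<^sup>+x. ennreal \<gamma> * (1 + ennreal (g1 x) + ennreal (g2 x)) \<partial>M)"
    by (rule nn_integral_add) (use m in auto)
  also have "(\<integral>\<^sup>+x. ennreal \<alpha> * ennreal (f x) \<partial>M) = ennreal \<alpha> * (\<integral>\<^sup>+x. ennreal (f x) \<partial>M)"
    by (rule nn_integral_cmult) (use m in auto)
  also have "(\<integral>\<^sup>+x. ennreal \<gamma> * (1 + ennreal (g1 x) + ennreal (g2 x)) \<partial>M) = ennreal \<gamma> * (\<integral>\<^sup>+x. (1 + ennreal (g1 x) + ennreal (g2 x)) \<partial>M)"
    by (rule nn_integral_cmult) (use m in auto)
  also have "(\<integral>\<^sup>+x. (1 + ennreal (g1 x) + ennreal (g2 x)) \<partial>M) = (\<integral>\<^sup>+x. (1 + ennreal (g1 x)) \<partial>M) + (\<integral>\<^sup>+x. ennreal (g2 x) \<partial>M)"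
    by (rule nn_integral_add) (use m in auto)
  also have "(\<integral>\<^sup>+x. (1 + ennreal (g1 x)) \<partial>M) = (\<integral>\<^sup>+x. 1 \<partial>M) + (\<integral>\<^sup>+x. ennreal (g1 x) \<partial>M)"
    by (rule nn_integral_add) (use m in auto)
  also have "(\<integral>\<^sup>+x. 1 \<partial>M) = 1" by (simp add: emeasure_space_1)
  finally show ?thesis .
qed

context L6 begin

lemma gam_nn: "0 \<le> gam" unfolding gam_def using kp0 c0_nn by auto

lemma CY_nn: "0 \<le> CY" unfolding CY_def using kp0 c0_nn gam_nn A1_K by auto

lemma Y_rec:
  assumes l: "law s phi"
    and h: "0 < h" "h*K \<le> 1" "h \<le> 1" "4*h*L^2 \<le> K" "8*gam*h \<le> K"
  shows "(\<integral>\<^sup>+\<omega>. ennreal (norm (Y s h phi (Suc k) \<omega>)^4) \<partial>M)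
    \<le> ennreal (1 - K*h/2) * (\<integral>\<^sup>+\<omega>. ennreal (norm (Y s h phi k \<omega>)^4) \<partial>M) + ennreal (CY * h)"
proof -
  have s: "s \<ge> 1" and pm: "phi \<in> borel_measurable borel" using l unfolding law_def by auto
  define c where "c = \<beta> * sqrt h"
  define F where "F p = ennreal (norm (fst (fst p) + h *\<^sub>R b (fst (fst p)) (phi (fst (snd p))) + c *\<^sub>R snd (snd p))^4)"
    for p :: "((real^'d) \<times> (real^'d)) \<times> ((real^'n) \<times> (real^'d))"
  have bm: "(\<lambda>p::((real^'d) \<times> (real^'d)) \<times> ((real^'n) \<times> (real^'d)). b (fst (fst p)) (phi (fst (snd p))))
      \<in> borel_measurable ((borel \<Otimes>\<^sub>M borel) \<Otimes>\<^sub>M (borel \<Otimes>\<^sub>M borel))"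
    by (rule b_comp_meas) (use pm in measurable)
  have Fm': "F \<in> borel_measurable ((borel \<Otimes>\<^sub>M borel) \<Otimes>\<^sub>M (borel \<Otimes>\<^sub>M borel))"
    unfolding F_def[abs_def] using bm by measurable
  then have Fm: "F \<in> borel_measurable (borel \<Otimes>\<^sub>M (borel \<Otimes>\<^sub>M borel))" by (simp only: borel_prod)
  have kh: "0 \<le> 1 - K*h/2" using h by (simp add: mult.commute)
  have "(\<integral>\<^sup>+\<omega>. ennreal (norm (Y s h phi (Suc k) \<omega>)^4) \<partial>M)
      = (\<integral>\<^sup>+\<omega>. F ((Y s h phi k \<omega>, Y s h phi k \<omega>), (U s k \<omega>, Z (Suc k) \<omega>)) \<partial>M)"
    unfolding F_def c_def by (simp add: Y_Suc)
  also have "\<dots> = (\<integral>\<^sup>+w. (\<integral>\<^sup>+u. (\<integral>\<^sup>+z. F (w, (u, z)) \<partial>(distr M borel (Z (Suc k)))) \<partial>(\<mu> (2 * s)))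
         \<partial>(distr M borel (\<lambda>\<omega>. (Y s h phi k \<omega>, Y s h phi k \<omega>))))"
    by (rule key_indep[OF s pm pm Fm])
  also have "\<dots> \<le> (\<integral>\<^sup>+w. ennreal ((1 - K*h/2) * norm (fst w)^4 + CY * h) \<partial>(distr M borel (\<lambda>\<omega>. (Y s h phi k \<omega>, Y s h phi k \<omega>))))"
    by (rule nn_integral_mono) (unfold F_def c_def, simp, rule Y_point[OF l _ h], simp)
  also have "\<dots> = (\<integral>\<^sup>+\<omega>. ennreal ((1 - K*h/2) * norm (Y s h phi k \<omega>)^4 + CY * h) \<partial>M)"
  proof -
    have "(\<lambda>\<omega>. (Y s h phi k \<omega>, Y s h phi k \<omega>)) \<in> measurable M (borel \<Otimes>\<^sub>M borel)"
      using Y_meas[OF pm] by (intro measurable_Pair) auto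
    then have Tm: "(\<lambda>\<omega>. (Y s h phi k \<omega>, Y s h phi k \<omega>)) \<in> measurable M borel" by (simp only: borel_prod)
    have "(\<lambda>w::(real^'d) \<times> (real^'d). ennreal ((1 - K*h/2) * norm (fst w)^4 + CY * h)) \<in> borel_measurable (borel \<Otimes>\<^sub>M borel)"
      by measurable
    then have gm: "(\<lambda>w::(real^'d) \<times> (real^'d). ennreal ((1 - K*h/2) * norm (fst w)^4 + CY * h)) \<in> borel_measurable (distr M borel (\<lambda>\<omega>. (Y s h phi k \<omega>, Y s h phi k \<omega>)))"
      by (simp only: borel_prod measurable_distr_eq1)
    show ?thesis using nn_integral_distr[OF Tm gm] by simp
  qed
  also have "\<dots> = ennreal (1 - K*h/2) * (\<integral>\<^sup>+\<omega>. ennreal (norm (Y s h phi k \<omega>)^4) \<partial>M) + ennreal (CY * h)"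
    by (rule nn_split1) (use Y_meas[OF pm] kh CY_nn h in auto)
  finally show ?thesis .
qed

lemma D_rec:
  assumes s: "s \<ge> 1" and h: "0 < h" "h*K \<le> 1" "h \<le> 1" "h * L^2 \<le> K"
  shows "(\<integral>\<^sup>+\<omega>. ennreal (norm (Y s h (phiB s) (Suc k) \<omega> - Y s h (phiA s) (Suc k) \<omega>)^4) \<partial>M)
    \<le> ennreal (1 - K*h/2) * (\<integral>\<^sup>+\<omega>. ennreal (norm (Y s h (phiB s) k \<omega> - Y s h (phiA s) k \<omega>)^4) \<partial>M)
      + ennreal ((1536*(kp/real s)^2/K + 48*(kp/(real s)^2))*h^3)
        * (1 + (\<integral>\<^sup>+\<omega>. ennreal (norm (Y s h (phiB s) k \<omega>)^4) \<partial>M) + (\<integral>\<^sup>+\<omega>. ennreal (norm (Y s h (phiA s) k \<omega>)^4) \<partial>M))"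
proof -
  have pA: "phiA s \<in> borel_measurable borel" and pB: "phiB s \<in> borel_measurable borel"
    using A8_meas1 A8_meas2 s by auto
  define c where "c = \<beta> * sqrt h"
  define CD where "CD = (1536*(kp/real s)^2/K + 48*(kp/(real s)^2))*h^3"
  have CD0: "0 \<le> CD" unfolding CD_def using A1_K h kp0 by auto
  define F where "F p = ennreal (norm ((fst (fst p) + h *\<^sub>R b (fst (fst p)) (phiB s (fst (snd p))) + c *\<^sub>R snd (snd p))
      - (snd (fst p) + h *\<^sub>R b (snd (fst p)) (phiA s (fst (snd p))) + c *\<^sub>R snd (snd p)))^4)"
    for p :: "((real^'d) \<times> (real^'d)) \<times> ((real^'n) \<times> (real^'d))"
  have bm1: "(\<lambda>p::((real^'d) \<times> (real^'d)) \<times> ((real^'n) \<times> (real^'d)). b (fst (fst p)) (phiB s (fst (snd p))))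
      \<in> borel_measurable ((borel \<Otimes>\<^sub>M borel) \<Otimes>\<^sub>M (borel \<Otimes>\<^sub>M borel))"
    by (rule b_comp_meas) (use pB in measurable)
  have bm2: "(\<lambda>p::((real^'d) \<times> (real^'d)) \<times> ((real^'n) \<times> (real^'d)). b (snd (fst p)) (phiA s (fst (snd p))))
      \<in> borel_measurable ((borel \<Otimes>\<^sub>M borel) \<Otimes>\<^sub>M (borel \<Otimes>\<^sub>M borel))"
    by (rule b_comp_meas) (use pA in measurable)
  have Fm': "F \<in> borel_measurable ((borel \<Otimes>\<^sub>M borel) \<Otimes>\<^sub>M (borel \<Otimes>\<^sub>M borel))"
    unfolding F_def[abs_def] using bm1 bm2 by measurable
  then have Fm: "F \<in> borel_measurable (borel \<Otimes>\<^sub>M (borel \<Otimes>\<^sub>M borel))" by (simp only: borel_prod)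
  have kh: "0 \<le> 1 - K*h/2" using h by (simp add: mult.commute)
  interpret PZ: prob_space "distr M borel (Z (Suc k))" by (rule prob_space_distr) (rule Z_meas)
  have "(\<integral>\<^sup>+\<omega>. ennreal (norm (Y s h (phiB s) (Suc k) \<omega> - Y s h (phiA s) (Suc k) \<omega>)^4) \<partial>M)
      = (\<integral>\<^sup>+\<omega>. F ((Y s h (phiB s) k \<omega>, Y s h (phiA s) k \<omega>), (U s k \<omega>, Z (Suc k) \<omega>)) \<partial>M)"
    unfolding F_def c_def by (simp add: Y_Suc)
  also have "\<dots> = (\<integral>\<^sup>+w. (\<integral>\<^sup>+u. (\<integral>\<^sup>+z. F (w, (u, z)) \<partial>(distr M borel (Z (Suc k)))) \<partial>(\<mu> (2 * s)))
         \<partial>(distr M borel (\<lambda>\<omega>. (Y s h (phiB s) k \<omega>, Y s h (phiA s) k \<omega>))))"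
    by (rule key_indep[OF s pB pA Fm])
  also have "\<dots> \<le> (\<integral>\<^sup>+w. ennreal ((1 - K*h/2) * norm (fst w - snd w)^4 + CD * (1 + norm (fst w)^4 + norm (snd w)^4))
         \<partial>(distr M borel (\<lambda>\<omega>. (Y s h (phiB s) k \<omega>, Y s h (phiA s) k \<omega>))))"
  proof (rule nn_integral_mono)
    fix w :: "(real^'d) \<times> (real^'d)"
    have "(\<integral>\<^sup>+u. (\<integral>\<^sup>+z. F (w, (u, z)) \<partial>(distr M borel (Z (Suc k)))) \<partial>(\<mu> (2 * s)))
       = (\<integral>\<^sup>+u. ennreal (norm ((fst w + h *\<^sub>R b (fst w) (phiB s u)) - (snd w + h *\<^sub>R b (snd w) (phiA s u)))^4) \<partial>(\<mu> (2 * s)))"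
    proof -
      have e1: "emeasure (distr M borel (Z (Suc k))) UNIV = 1" using PZ.emeasure_space_1 by simp
      show ?thesis unfolding F_def by (intro nn_integral_cong) (simp add: e1 algebra_simps)
    qed
    also have "\<dots> \<le> ennreal ((1 - K*h/2) * norm (fst w - snd w)^4 + CD * (1 + norm (fst w)^4 + norm (snd w)^4))"
      unfolding CD_def using D_point[OF s h, of "fst w" "snd w"] by (simp add: mult.assoc)
    finally show "(\<integral>\<^sup>+u. (\<integral>\<^sup>+z. F (w, (u, z)) \<partial>(distr M borel (Z (Suc k)))) \<partial>(\<mu> (2 * s)))
      \<le> ennreal ((1 - K*h/2) * norm (fst w - snd w)^4 + CD * (1 + norm (fst w)^4 + norm (snd w)^4))" .
  qed
  also have "\<dots> = (\<integral>\<^sup>+\<omega>. ennreal ((1 - K*h/2) * norm (Y s h (phiB s) k \<omega> - Y s h (phiA s) k \<omega>)^4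
        + CD * (1 + norm (Y s h (phiB s) k \<omega>)^4 + norm (Y s h (phiA s) k \<omega>)^4)) \<partial>M)"
  proof -
    have "(\<lambda>\<omega>. (Y s h (phiB s) k \<omega>, Y s h (phiA s) k \<omega>)) \<in> measurable M (borel \<Otimes>\<^sub>M borel)"
      using Y_meas[OF pA] Y_meas[OF pB] by (intro measurable_Pair) auto
    then have Tm: "(\<lambda>\<omega>. (Y s h (phiB s) k \<omega>, Y s h (phiA s) k \<omega>)) \<in> measurable M borel" by (simp only: borel_prod)
    have "(\<lambda>w::(real^'d) \<times> (real^'d). ennreal ((1 - K*h/2) * norm (fst w - snd w)^4 + CD * (1 + norm (fst w)^4 + norm (snd w)^4)))
       \<in> borel_measurable (borel \<Otimes>\<^sub>M borel)"
      by measurable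
    then have gm: "(\<lambda>w::(real^'d) \<times> (real^'d). ennreal ((1 - K*h/2) * norm (fst w - snd w)^4 + CD * (1 + norm (fst w)^4 + norm (snd w)^4)))
       \<in> borel_measurable (distr M borel (\<lambda>\<omega>. (Y s h (phiB s) k \<omega>, Y s h (phiA s) k \<omega>)))"
      by (simp only: borel_prod measurable_distr_eq1)
    show ?thesis using nn_integral_distr[OF Tm gm] by simp
  qed
  also have "\<dots> = ennreal (1 - K*h/2) * (\<integral>\<^sup>+\<omega>. ennreal (norm (Y s h (phiB s) k \<omega> - Y s h (phiA s) k \<omega>)^4) \<partial>M)
      + ennreal CD * (1 + (\<integral>\<^sup>+\<omega>. ennreal (norm (Y s h (phiB s) k \<omega>)^4) \<partial>M) + (\<integral>\<^sup>+\<omega>. ennreal (norm (Y s h (phiA s) k \<omega>)^4) \<partial>M))"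
    by (rule nn_split3) (use Y_meas[OF pA] Y_meas[OF pB] kh CD0 in auto)
  finally show ?thesis unfolding CD_def .
qed

end


context L6 begin

definition m0 :: real where "m0 = enn2real (\<integral>\<^sup>+\<omega>. ennreal ((norm (X0 \<omega>))^4) \<partial>M)"
definition BY :: real where "BY = max m0 (2*CY/K)"

lemma m0_eq: "(\<integral>\<^sup>+\<omega>. ennreal ((norm (X0 \<omega>))^4) \<partial>M) = ennreal m0"
  unfolding m0_def using X0_mom by (simp add: ennreal_enn2real less_top[symmetric])

lemma BY_nn: "0 \<le> BY" unfolding BY_def m0_def by (simp add: le_max_iff_disj enn2real_nonneg)

lemma Y_bound:
  assumes l: "law s phi"
    and h: "0 < h" "h*K \<le> 1" "h \<le> 1" "4*h*L^2 \<le> K" "8*gam*h \<le> K"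
  shows "(\<integral>\<^sup>+\<omega>. ennreal (norm (Y s h phi k \<omega>)^4) \<partial>M) \<le> ennreal BY"
proof (induction k)
  case 0
  have "m0 \<le> BY" unfolding BY_def by simp
  then show ?case by (simp add: Y_0 m0_eq ennreal_leI)
next
  case (Suc k)
  have kh: "0 \<le> 1 - K*h/2" using h by (simp add: mult.commute)
  have "(\<integral>\<^sup>+\<omega>. ennreal (norm (Y s h phi (Suc k) \<omega>)^4) \<partial>M)
      \<le> ennreal (1 - K*h/2) * (\<integral>\<^sup>+\<omega>. ennreal (norm (Y s h phi k \<omega>)^4) \<partial>M) + ennreal (CY * h)"
    by (rule Y_rec[OF l h])
  also have "\<dots> \<le> ennreal (1 - K*h/2) * ennreal BY + ennreal (CY * h)"
    by (intro add_mono mult_left_mono Suc) auto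
  also have "\<dots> = ennreal ((1 - K*h/2) * BY + CY * h)"
    using kh BY_nn CY_nn h by (simp add: ennreal_mult ennreal_plus)
  also have "\<dots> \<le> ennreal BY"
  proof (rule ennreal_leI)
    have "2*CY/K \<le> BY" unfolding BY_def by simp
    then have "2*CY \<le> K * BY" using A1_K by (simp add: divide_le_eq mult.commute)
    then have "CY * h \<le> (K*h/2) * BY" using h by (simp add: algebra_simps)
    then show "(1 - K*h/2) * BY + CY * h \<le> BY" by (simp add: algebra_simps)
  qed
  finally show ?case .
qed

lemma D_bound:
  assumes s: "s \<ge> 1"
    and h: "0 < h" "h*K \<le> 1" "h \<le> 1" "4*h*L^2 \<le> K" "8*gam*h \<le> K"
  defines "CD \<equiv> (1536*(kp/real s)^2/K + 48*(kp/(real s)^2))*h^3"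
  shows "(\<integral>\<^sup>+\<omega>. ennreal (norm (Y s h (phiB s) k \<omega> - Y s h (phiA s) k \<omega>)^4) \<partial>M) \<le> ennreal (2*CD*(1+2*BY)/(K*h))"
proof (induction k)
  case 0
  then show ?case by (simp add: Y_0)
next
  case (Suc k)
  have "0 \<le> h * L^2" using h by simp
  then have hL: "h * L^2 \<le> K" using h(4) by linarith
  have kh: "0 \<le> 1 - K*h/2" using h by (simp add: mult.commute)
  have CD0: "0 \<le> CD" unfolding CD_def using A1_K h kp0 by auto
  define BD where "BD = 2*CD*(1+2*BY)/(K*h)"
  have BD0: "0 \<le> BD" unfolding BD_def using CD0 BY_nn A1_K h by auto
  have yB: "(\<integral>\<^sup>+\<omega>. ennreal (norm (Y s h (phiB s) k \<omega>)^4) \<partial>M) \<le> ennreal BY"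
    by (rule Y_bound[OF lawB[OF s] h])
  have yA: "(\<integral>\<^sup>+\<omega>. ennreal (norm (Y s h (phiA s) k \<omega>)^4) \<partial>M) \<le> ennreal BY"
    by (rule Y_bound[OF lawA[OF s] h])
  have "(\<integral>\<^sup>+\<omega>. ennreal (norm (Y s h (phiB s) (Suc k) \<omega> - Y s h (phiA s) (Suc k) \<omega>)^4) \<partial>M)
    \<le> ennreal (1 - K*h/2) * (\<integral>\<^sup>+\<omega>. ennreal (norm (Y s h (phiB s) k \<omega> - Y s h (phiA s) k \<omega>)^4) \<partial>M)
      + ennreal CD
        * (1 + (\<integral>\<^sup>+\<omega>. ennreal (norm (Y s h (phiB s) k \<omega>)^4) \<partial>M) + (\<integral>\<^sup>+\<omega>. ennreal (norm (Y s h (phiA s) k \<omega>)^4) \<partial>M))"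
    unfolding CD_def by (rule D_rec[OF s h(1-3) hL])
  also have "\<dots> \<le> ennreal (1 - K*h/2) * ennreal BD + ennreal CD * (1 + ennreal BY + ennreal BY)"
  proof -
    have a1: "ennreal (1 - K*h/2) * (\<integral>\<^sup>+\<omega>. ennreal (norm (Y s h (phiB s) k \<omega> - Y s h (phiA s) k \<omega>)^4) \<partial>M)
        \<le> ennreal (1 - K*h/2) * ennreal BD"
      by (rule mult_left_mono) (use Suc in \<open>simp_all add: BD_def\<close>)
    have a2: "1 + (\<integral>\<^sup>+\<omega>. ennreal (norm (Y s h (phiB s) k \<omega>)^4) \<partial>M) + (\<integral>\<^sup>+\<omega>. ennreal (norm (Y s h (phiA s) k \<omega>)^4) \<partial>M)
       \<le> 1 + ennreal BY + ennreal BY"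
      by (rule add_mono[OF add_mono[OF order_refl yB] yA])
    have a3: "ennreal CD * (1 + (\<integral>\<^sup>+\<omega>. ennreal (norm (Y s h (phiB s) k \<omega>)^4) \<partial>M) + (\<integral>\<^sup>+\<omega>. ennreal (norm (Y s h (phiA s) k \<omega>)^4) \<partial>M))
       \<le> ennreal CD * (1 + ennreal BY + ennreal BY)"
      by (rule mult_left_mono[OF a2]) simp
    show ?thesis by (rule add_mono[OF a1 a3])
  qed
  also have "\<dots> = ennreal ((1 - K*h/2) * BD + CD * (1 + 2*BY))"
  proof -
    have e1: "ennreal (1 - K*h/2) * ennreal BD = ennreal ((1 - K*h/2) * BD)" using kh BD0 by (simp add: ennreal_mult)
    have e2: "1 + ennreal BY + ennreal BY = ennreal (1 + 2*BY)"
    proof -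
      have "ennreal (1 + 2*BY) = ennreal (1 + BY) + ennreal BY"
        using BY_nn ennreal_plus[of "1+BY" BY] by (simp add: algebra_simps)
      also have "ennreal (1 + BY) = 1 + ennreal BY" using BY_nn ennreal_plus[of 1 BY] by simp
      finally show ?thesis by simp
    qed
    have e3: "ennreal CD * ennreal (1 + 2*BY) = ennreal (CD*(1+2*BY))" using CD0 BY_nn by (simp add: ennreal_mult)
    have e4: "ennreal ((1 - K*h/2) * BD) + ennreal (CD*(1+2*BY)) = ennreal ((1 - K*h/2) * BD + CD * (1 + 2*BY))"
      by (rule ennreal_plus[symmetric]) (use kh BD0 CD0 BY_nn in auto)
    show ?thesis unfolding e1 e2 e3 e4 ..
  qed
  also have "(1 - K*h/2) * BD + CD * (1 + 2*BY) = BD"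
  proof -
    have "K*h/2 * BD = CD*(1+2*BY)" unfolding BD_def using A1_K h by simp
    then show ?thesis by (simp add: algebra_simps)
  qed
  finally show ?case unfolding BD_def .
qed

end


context L6 begin

lemma main:
  "\<exists>h0>0. \<exists>C>0. \<forall>s::nat. \<forall>h. \<forall>k::nat. s \<ge> 1 \<longrightarrow> 0 < h \<longrightarrow> h < h0 \<longrightarrow> k \<ge> 1 \<longrightarrow>
     (\<integral>\<^sup>+\<omega>. ennreal ((norm (
          fine_chain h \<beta> b X0 Z (\<lambda>k \<omega>. phiB s (U s k \<omega>)) k \<omega>
        - fine_chain h \<beta> b X0 Z (\<lambda>k \<omega>. phiA s (U s k \<omega>)) k \<omega>))^4) \<partial>M)
       \<le> ennreal (C * h^2 / (real s)^2)"
proof -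
  define h0 where "h0 = min 1 (min (1/K) (K/(4*L^2 + 8*gam + 1)))"
  define C where "C = 2*(1536*kp^2/K + 48*kp)*(1+2*BY)/K + 1"
  have den: "0 < 4*L^2 + 8*gam + 1" using gam_nn by (simp add: add_nonneg_pos)
  have h0: "0 < h0" unfolding h0_def using A1_K den by auto
  have C0': "0 \<le> 2*(1536*kp^2/K + 48*kp)*(1+2*BY)/K" using A1_K kp0 BY_nn by auto
  then have C: "0 < C" unfolding C_def by linarith
  have "\<forall>s::nat. \<forall>h. \<forall>k::nat. s \<ge> 1 \<longrightarrow> 0 < h \<longrightarrow> h < h0 \<longrightarrow> k \<ge> 1 \<longrightarrow>
     (\<integral>\<^sup>+\<omega>. ennreal ((norm (
          fine_chain h \<beta> b X0 Z (\<lambda>k \<omega>. phiB s (U s k \<omega>)) k \<omega>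
        - fine_chain h \<beta> b X0 Z (\<lambda>k \<omega>. phiA s (U s k \<omega>)) k \<omega>))^4) \<partial>M)
       \<le> ennreal (C * h^2 / (real s)^2)"
  proof (intro allI impI)
    fix s :: nat and h :: real and k :: nat
    assume s: "s \<ge> 1" and h: "0 < h" and hh: "h < h0" and k: "k \<ge> 1"
    have hK: "h*K \<le> 1"
    proof -
      have "h < 1/K" using hh unfolding h0_def by simp
      then show ?thesis using A1_K by (simp add: field_simps)
    qed
    have h1: "h \<le> 1" using hh unfolding h0_def by simp
    have hk2: "h * (4*L^2 + 8*gam + 1) \<le> K"
    proof -
      have "h < K/(4*L^2 + 8*gam + 1)" using hh unfolding h0_def by simp
      then show ?thesis using den by (simp add: field_simps)
    qed
    have hL: "4*h*L^2 \<le> K" using hk2 h gam_nn by (simp add: algebra_simps) (smt (verit) mult_nonneg_nonneg)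
    have hg: "8*gam*h \<le> K" using hk2 h gam_nn by (simp add: algebra_simps) (smt (verit) mult_nonneg_nonneg zero_le_power2)
    have b: "(\<integral>\<^sup>+\<omega>. ennreal (norm (Y s h (phiB s) k \<omega> - Y s h (phiA s) k \<omega>)^4) \<partial>M)
      \<le> ennreal (2*((1536*(kp/real s)^2/K + 48*(kp/(real s)^2))*h^3)*(1+2*BY)/(K*h))"
      by (rule D_bound[OF s h hK h1 hL hg])
    also have "\<dots> \<le> ennreal (C * h^2 / (real s)^2)"
    proof (rule ennreal_leI)
      have sp: "0 < real s" using s by simp
      have "2*((1536*(kp/real s)^2/K + 48*(kp/(real s)^2))*h^3)*(1+2*BY)/(K*h)
          = (2*(1536*kp^2/K + 48*kp)*(1+2*BY)/K) * h^2 / (real s)^2"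
        using sp h A1_K by (simp add: field_simps power2_eq_square power3_eq_cube)
      also have "\<dots> \<le> C * h^2 / (real s)^2"
        unfolding C_def using sp h by (intro divide_right_mono mult_right_mono) auto
      finally show "2*((1536*(kp/real s)^2/K + 48*(kp/(real s)^2))*h^3)*(1+2*BY)/(K*h) \<le> C * h^2 / (real s)^2" .
    qed
    finally show "(\<integral>\<^sup>+\<omega>. ennreal ((norm (
          fine_chain h \<beta> b X0 Z (\<lambda>k \<omega>. phiB s (U s k \<omega>)) k \<omega>
        - fine_chain h \<beta> b X0 Z (\<lambda>k \<omega>. phiA s (U s k \<omega>)) k \<omega>))^4) \<partial>M)
       \<le> ennreal (C * h^2 / (real s)^2)" unfolding Y_def .
  qed
  then show ?thesis using h0 C by blast
qed

end

theorem lemma6: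
  fixes a :: "real^'d \<Rightarrow> real^'d"
    and a' :: "real^'d \<Rightarrow> ((real^'d) \<Rightarrow>\<^sub>L (real^'d))"
    and a'' :: "real^'d \<Rightarrow> ((real^'d) \<Rightarrow>\<^sub>L ((real^'d) \<Rightarrow>\<^sub>L (real^'d)))"
    and b :: "real^'d \<Rightarrow> real^'n \<Rightarrow> real^'d"
    and \<mu> :: "nat \<Rightarrow> (real^'n) measure"
    and phiA phiB :: "nat \<Rightarrow> real^'n \<Rightarrow> real^'n"
    and M :: "'w measure"
    and X0 :: "'w \<Rightarrow> real^'d"
    and Z :: "nat \<Rightarrow> 'w \<Rightarrow> real^'d"
    and U :: "nat \<Rightarrow> nat \<Rightarrow> 'w \<Rightarrow> real^'n"
    and \<beta> L K Ca1 Ca2 \<kappa> L04 :: real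
  assumes beta: "\<beta> \<ge> 0"
    \<comment> \<open>standing setting: laws of drift variables and unbiasedness\<close>
    and b_meas: "case_prod b \<in> borel_measurable borel"
    and mu_prob: "\<And>s. s \<ge> 1 \<Longrightarrow> prob_space (\<mu> s)"
    and mu_sets: "\<And>s. s \<ge> 1 \<Longrightarrow> sets (\<mu> s) = sets borel"
    and unbiased_int: "\<And>s x. s \<ge> 1 \<Longrightarrow> integrable (\<mu> s) (b x)"
    and unbiased: "\<And>s x. s \<ge> 1 \<Longrightarrow> (\<integral>u. b x u \<partial>\<mu> s) = a x"
    \<comment> \<open>(A1)\<close>
    and A1_lip: "\<And>x y. norm (a x - a y) \<le> L * norm (x - y)"
    and A1_K: "K > 0"
    and A1_mono: "\<And>x y. inner (x - y) (a x - a y) \<le> - K * (norm (x - y))\<^sup>2"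
    and A1_d1: "\<And>x. (a has_derivative blinfun_apply (a' x)) (at x)"
    and A1_d2: "\<And>x. (a' has_derivative blinfun_apply (a'' x)) (at x)"
    and A1_cont: "continuous_on UNIV a''"
    and A1_b1: "\<And>x i. norm (a' x (axis i 1)) \<le> Ca1"
    and A1_b2: "\<And>x i j. norm (a'' x (axis i 1) (axis j 1)) \<le> Ca2"
    \<comment> \<open>(A3), with sigma_s^2 <= kappa/s\<close>
    and A3: "\<And>s x. s \<ge> 1 \<Longrightarrow>
       (\<integral>\<^sup>+u. ennreal ((norm (b x u - a x))^2) \<partial>\<mu> s) \<le> ennreal (\<kappa> / real s * (1 + (norm x)^2))"
    \<comment> \<open>(A4), with sigma^(4)_s <= kappa/s^2\<close>
    and A4: "\<And>s x. s \<ge> 1 \<Longrightarrow>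
       (\<integral>\<^sup>+u. ennreal ((norm (b x u - a x))^4) \<partial>\<mu> s) \<le> ennreal (\<kappa> / (real s)^2 * (1 + (norm x)^4))"
    \<comment> \<open>(A7)\<close>
    and A7: "\<And>x. (norm (a x))^4 \<le> L04 * (1 + (norm x)^4)"
    \<comment> \<open>(A8): a level-2s drift variable determines two level-s drift variables\<close>
    and A8_meas1: "\<And>s. s \<ge> 1 \<Longrightarrow> phiA s \<in> borel_measurable borel"
    and A8_meas2: "\<And>s. s \<ge> 1 \<Longrightarrow> phiB s \<in> borel_measurable borel"
    and A8_law1: "\<And>s. s \<ge> 1 \<Longrightarrow> distr (\<mu> (2 * s)) borel (phiA s) = \<mu> s"
    and A8_law2: "\<And>s. s \<ge> 1 \<Longrightarrow> distr (\<mu> (2 * s)) borel (phiB s) = \<mu> s"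
    and A8_split: "\<And>s. s \<ge> 1 \<Longrightarrow> AE u in \<mu> (2 * s).
        \<forall>x. b x u = (1/2) *\<^sub>R b x (phiA s u) + (1/2) *\<^sub>R b x (phiB s u)"
    \<comment> \<open>random inputs of the coupled chains\<close>
    and M_prob: "prob_space M"
    and X0_meas: "X0 \<in> borel_measurable M"
    and X0_mom: "(\<integral>\<^sup>+\<omega>. ennreal ((norm (X0 \<omega>))^4) \<partial>M) < \<infinity>"
    and Z_meas: "\<And>k. Z k \<in> borel_measurable M"
    and Z_gauss: "\<And>k. k \<ge> 1 \<Longrightarrow> std_gaussian_vec M (Z k)"
    and U_meas: "\<And>s k. U s k \<in> borel_measurable M"
    and U_law: "\<And>s k. s \<ge> 1 \<Longrightarrow> distr M borel (U s k) = \<mu> (2 * s)"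
    and indep: "\<And>s. s \<ge> 1 \<Longrightarrow> rv_indep M X0 Z (U s)"
  shows "\<exists>h0>0. \<exists>C>0. \<forall>s::nat. \<forall>h. \<forall>k::nat. s \<ge> 1 \<longrightarrow> 0 < h \<longrightarrow> h < h0 \<longrightarrow> k \<ge> 1 \<longrightarrow>
     (\<integral>\<^sup>+\<omega>. ennreal ((norm (
          fine_chain h \<beta> b X0 Z (\<lambda>k \<omega>. phiB s (U s k \<omega>)) k \<omega>
        - fine_chain h \<beta> b X0 Z (\<lambda>k \<omega>. phiA s (U s k \<omega>)) k \<omega>))^4) \<partial>M)
       \<le> ennreal (C * h^2 / (real s)^2)"
  proof -
  interpret L6 M a b \<mu> phiA phiB X0 Z U \<beta> L K \<kappa> L04
    by (rule L6.intro[OF M_prob], rule L6_axioms.intro) (assumption | rule assms)+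
  show ?thesis by (rule main)
qed


end
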